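(* Let $P_Z$ be a distribution on $\mathcal{Z}$. Let $\tilde S=(\tilde Z_1,\ldots,\tilde Z_{2n})$ consist of $2n$ i.i.d. samples from $P_Z$, let $U=(U_1,\ldots,U_n)$ be i.i.d. Bernoulli$(1/2)$ random variables independent of $\tilde S$, let $Z_i=\tilde Z_{i+U_in}$ and $S=(Z_1,\ldots,Z_n)$, and let $W\in\mathcal{W}$ be produced from $S$ by a learning algorithm $P_{W|S}$. Let $\ell:\mathcal{W}\times\mathcal{Z}\to\mathbb{R}$ be a loss function such that $(\mathcal{W},\rho)$ is Polish and $w\mapsto\ell(w,z)$ is $L$-Lipschitz under $\rho$ for every $z\in\mathcal{Z}$. Let $\tilde S_i=(\tilde Z_i,\tilde Z_{i+n})$. Then $$\big|\overline{\mathrm{gen}}(W,S)\big|\le \frac{2L}{n}\sum_{i=1}^n\mathbb{E}\big[\mathbb{W}(P_{W|\tilde S_i,U_i},P_{W|\tilde S_i})\big].$$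
   Context: Population risk $\mathscr{L}_{P_Z}(w)=\mathbb{E}[\ell(w,Z)]$, $Z\sim P_Z$; empirical risk $\mathscr{L}_s(w)=\frac1n\sum_{i=1}^n\ell(w,z_i)$; $\overline{\mathrm{gen}}(W,S)=\mathbb{E}[\mathscr{L}_{P_Z}(W)-\mathscr{L}_S(W)]$. $L$-Lipschitz under $\rho$ means $|f(x)-f(y)|\le L\rho(x,y)$. $\mathbb{W}$ is the order-1 Wasserstein distance with respect to $\rho$: $\mathbb{W}(P,Q)=\inf_{R\in\Pi(P,Q)}\int\rho(x,y)\,dR(x,y)$. *)

theory Defs
  imports "HOL-Probability.Probability"
begin

definition couplings :: "'w::metric_space measure \<Rightarrow> 'w measure \<Rightarrow> ('w \<times> 'w) measure set" where
  "couplings P Q = {R. sets R = sets (borel \<Otimes>\<^sub>M borel) \<and>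
       distr R borel fst = P \<and> distr R borel snd = Q}"

definition wasserstein1 :: "'w::metric_space measure \<Rightarrow> 'w measure \<Rightarrow> ennreal" where
  "wasserstein1 P Q = (INF R\<in>couplings P Q. \<integral>\<^sup>+ p. ennreal (dist (fst p) (snd p)) \<partial>R)"

definition is_cond_distr ::
  "'o measure \<Rightarrow> 'a measure \<Rightarrow> ('o \<Rightarrow> 'a) \<Rightarrow> 'b measure \<Rightarrow> ('o \<Rightarrow> 'b) \<Rightarrow> ('a \<Rightarrow> 'b measure) \<Rightarrow> bool" where
  "is_cond_distr M MX X N Y kappa \<longleftrightarrow>
     X \<in> measurable M MX \<and> Y \<in> measurable M N \<and>
     kappa \<in> measurable MX (prob_algebra N) \<and>
     (\<forall>A\<in>sets MX. \<forall>B\<in>sets N.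
        emeasure M {\<omega>\<in>space M. X \<omega> \<in> A \<and> Y \<omega> \<in> B} =
        (\<integral>\<^sup>+ x. indicator A x * emeasure (kappa x) B \<partial>(distr M MX X)))"

definition sel_sample :: "nat \<Rightarrow> (nat \<Rightarrow> 'z) \<Rightarrow> (nat \<Rightarrow> bool) \<Rightarrow> nat \<Rightarrow> 'z" where
  "sel_sample n zt u = (\<lambda>i\<in>{..<n}. zt (if u i then i + n else i))"

definition supersample_space ::
  "'z measure \<Rightarrow> nat \<Rightarrow> ((nat \<Rightarrow> 'z) \<Rightarrow> 'w::topological_space measure)
     \<Rightarrow> ((nat \<Rightarrow> 'z) \<times> (nat \<Rightarrow> bool) \<times> 'w) measure" where
  "supersample_space PZ n K =
     PiM {..<2*n} (\<lambda>_. PZ) \<bind> (\<lambda>zt.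
     PiM {..<n} (\<lambda>_. measure_pmf (bernoulli_pmf (1/2))) \<bind> (\<lambda>u.
     K (sel_sample n zt u) \<bind> (\<lambda>w.
     return (PiM {..<2*n} (\<lambda>_. PZ) \<Otimes>\<^sub>M
             (PiM {..<n} (\<lambda>_. measure_pmf (bernoulli_pmf (1/2))) \<Otimes>\<^sub>M borel)) (zt, u, w))))"

end

theory Submission
  imports Defs
begin

lemma wass_bound:
  fixes f :: "'w::polish_space \<Rightarrow> real"
  assumes P: "prob_space P" "sets P = sets borel"
    and Q: "prob_space Q" "sets Q = sets borel"
    and lip: "1-lipschitz_on UNIV f"
  shows "ennreal \<bar>(\<integral>x. f x \<partial>P) - (\<integral>x. f x \<partial>Q)\<bar> \<le> wasserstein1 P Q"
  unfolding wasserstein1_def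
proof (rule INF_greatest)
  fix R assume R: "R \<in> couplings P Q"
  have sR: "sets R = sets (borel \<Otimes>\<^sub>M borel)" and RP: "distr R borel fst = P" and RQ: "distr R borel snd = Q"
    using R by (auto simp: couplings_def)
  have fm: "f \<in> borel_measurable borel"
    using lipschitz_on_continuous_on[OF lip] by (rule borel_measurable_continuous_onI)
  have mfst: "fst \<in> measurable R borel" and msnd: "snd \<in> measurable R borel"
    using sR by (auto simp: measurable_cong_sets[OF sR refl])
  have dm: "(\<lambda>p. dist (fst p) (snd p)) \<in> borel_measurable R"
    using mfst msnd by measurable
  have ffst: "(\<lambda>p. f (fst p)) \<in> borel_measurable R" using fm mfst by measurable
  have fsnd: "(\<lambda>p. f (snd p)) \<in> borel_measurable R" using fm msnd by measurable
  have Pi: "integrable P f \<longleftrightarrow> integrable R (\<lambda>p. f (fst p))"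
    using integrable_distr_eq[OF mfst fm] RP by simp
  have Qi: "integrable Q f \<longleftrightarrow> integrable R (\<lambda>p. f (snd p))"
    using integrable_distr_eq[OF msnd fm] RQ by simp
  have PI: "(\<integral>x. f x \<partial>P) = (\<integral>p. f (fst p) \<partial>R)"
    using integral_distr[OF mfst fm] RP by simp
  have QI: "(\<integral>x. f x \<partial>Q) = (\<integral>p. f (snd p) \<partial>R)"
    using integral_distr[OF msnd fm] RQ by simp
  have lipd: "\<bar>f (fst p) - f (snd p)\<bar> \<le> dist (fst p) (snd p)" for p
    using lip by (auto simp: lipschitz_on_def dist_real_def)
  show "ennreal \<bar>(\<integral>x. f x \<partial>P) - (\<integral>x. f x \<partial>Q)\<bar> \<le> (\<integral>\<^sup>+ p. ennreal (dist (fst p) (snd p)) \<partial>R)"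
  proof (cases "(\<integral>\<^sup>+ p. ennreal (dist (fst p) (snd p)) \<partial>R) = \<infinity>")
    case True then show ?thesis by simp
  next
    case False
    then have di: "integrable R (\<lambda>p. dist (fst p) (snd p))"
      using dm by (auto simp: integrable_iff_bounded top.not_eq_extremum)
    have dfm: "(\<lambda>p. f (fst p) - f (snd p)) \<in> borel_measurable R" using ffst fsnd by measurable
    have dfi: "integrable R (\<lambda>p. f (fst p) - f (snd p))"
      by (rule Bochner_Integration.integrable_bound[OF di dfm]) (auto intro!: AE_I2 simp: lipd)
    show ?thesis
    proof (cases "integrable P f \<and> integrable Q f")
      case True
      have "\<bar>(\<integral>x. f x \<partial>P) - (\<integral>x. f x \<partial>Q)\<bar> = \<bar>\<integral>p. f (fst p) - f (snd p) \<partial>R\<bar>"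
        using True Pi Qi by (simp add: PI QI)
      also have "\<dots> \<le> (\<integral>p. \<bar>f (fst p) - f (snd p)\<bar> \<partial>R)" by (rule integral_abs_bound)
      also have "\<dots> \<le> (\<integral>p. dist (fst p) (snd p) \<partial>R)"
        using dfi di lipd by (intro integral_mono) auto
      finally have "ennreal \<bar>(\<integral>x. f x \<partial>P) - (\<integral>x. f x \<partial>Q)\<bar> \<le> ennreal (\<integral>p. dist (fst p) (snd p) \<partial>R)"
        by (rule ennreal_leI)
      also have "\<dots> = (\<integral>\<^sup>+ p. ennreal (dist (fst p) (snd p)) \<partial>R)"
        using di by (subst nn_integral_eq_integral) auto
      finally show ?thesis .
    next
      case False
      have "\<not> integrable P f \<and> \<not> integrable Q f"
      proof -
        have "integrable R (\<lambda>p. f (fst p)) \<longleftrightarrow> integrable R (\<lambda>p. f (snd p))"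
        proof
          assume "integrable R (\<lambda>p. f (fst p))"
          from Bochner_Integration.integrable_diff[OF this dfi] show "integrable R (\<lambda>p. f (snd p))" by simp
        next
          assume "integrable R (\<lambda>p. f (snd p))"
          from Bochner_Integration.integrable_add[OF this dfi] show "integrable R (\<lambda>p. f (fst p))" by simp
        qed
        then show ?thesis using False Pi Qi by blast
      qed
      then show ?thesis by (simp add: not_integrable_integral_eq)
    qed
  qed
qed

lemma integral_measurable_kernel:
  fixes f :: "'a \<Rightarrow> 'b \<Rightarrow> real"
  assumes f[measurable]: "(\<lambda>(x, y). f x y) \<in> borel_measurable (M \<Otimes>\<^sub>M N)"
  assumes L[measurable]: "L \<in> measurable M (subprob_algebra N)"
  shows "(\<lambda>x. integral\<^sup>L (L x) (f x)) \<in> borel_measurable M"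
proof -
  note integral_measurable_subprob_algebra[measurable]
  note measurable_distr2[measurable]
  have "(\<lambda>x. integral\<^sup>L (distr (L x) (M \<Otimes>\<^sub>M N) (\<lambda>y. (x, y))) (\<lambda>(x, y). f x y)) \<in> borel_measurable M"
    by measurable
  then show ?thesis
  proof (rule measurable_cong[THEN iffD1, rotated])
    fix x assume x: "x \<in> space M"
    have sL: "sets (L x) = sets N" using L x by (rule sets_kernel)
    have "(\<lambda>y. (x, y)) \<in> measurable (L x) (M \<Otimes>\<^sub>M N)"
      by (subst measurable_cong_sets[OF sL refl]) (rule measurable_Pair1'[OF x])
    moreover have "(\<lambda>(x, y). f x y) \<in> borel_measurable (M \<Otimes>\<^sub>M N)" by (rule f)
    ultimately have "integral\<^sup>L (distr (L x) (M \<Otimes>\<^sub>M N) (\<lambda>y. (x, y))) (\<lambda>(x, y). f x y) = (\<integral>y. (\<lambda>(x, y). f x y) (x, y) \<partial>L x)"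
      by (rule integral_distr)
    then show "integral\<^sup>L (distr (L x) (M \<Otimes>\<^sub>M N) (\<lambda>y. (x, y))) (\<lambda>(x, y). f x y) = integral\<^sup>L (L x) (f x)"
      by simp
  qed
qed

lemma cond_distr_measure_eq:
  assumes M: "prob_space M" and cd: "is_cond_distr M MX X N Y kappa"
  shows "distr M (MX \<Otimes>\<^sub>M N) (\<lambda>\<omega>. (X \<omega>, Y \<omega>)) =
         distr M MX X \<bind> (\<lambda>x. distr (kappa x) (MX \<Otimes>\<^sub>M N) (\<lambda>y. (x, y)))"
    (is "?L = ?R")
proof -
  interpret prob_space M by fact
  have X[measurable]: "X \<in> measurable M MX" and Y[measurable]: "Y \<in> measurable M N"
    and K: "kappa \<in> measurable MX (prob_algebra N)"
    and eq: "\<And>A B. A\<in>sets MX \<Longrightarrow> B\<in>sets N \<Longrightarrow> emeasure M {\<omega>\<in>space M. X \<omega> \<in> A \<and> Y \<omega> \<in> B} =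
        (\<integral>\<^sup>+ x. indicator A x * emeasure (kappa x) B \<partial>(distr M MX X))"
    using cd by (auto simp: is_cond_distr_def)
  have Ks[measurable]: "kappa \<in> measurable MX (subprob_algebra N)" using K by (rule measurable_prob_algebraD)
  have kern[measurable]: "(\<lambda>x. distr (kappa x) (MX \<Otimes>\<^sub>M N) (\<lambda>y. (x, y))) \<in> measurable MX (subprob_algebra (MX \<Otimes>\<^sub>M N))"
  proof (rule measurable_distr2[where f="\<lambda>x y. (x, y)", OF _ Ks])
    show "case_prod (\<lambda>x y. (x, y)) \<in> measurable (MX \<Otimes>\<^sub>M N) (MX \<Otimes>\<^sub>M N)"
      by (simp only: case_prod_Pair measurable_ident)
  qed
  have kern': "(\<lambda>x. distr (kappa x) (MX \<Otimes>\<^sub>M N) (\<lambda>y. (x, y))) \<in> measurable (distr M MX X) (subprob_algebra (MX \<Otimes>\<^sub>M N))"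
    by (subst measurable_cong_sets[OF sets_distr refl]) (rule kern)
  have ne: "space (distr M MX X) \<noteq> {}"
    using prob_space_distr[OF X] prob_space.not_empty by blast
  have sR: "sets ?R = sets (MX \<Otimes>\<^sub>M N)"
    by (rule sets_bind[OF _ ne]) simp
  let ?E = "{a \<times> b |a b. a \<in> sets MX \<and> b \<in> sets N}"
  show ?thesis
  proof (rule measure_eqI_generator_eq[OF Int_stable_pair_measure_generator[of MX N], where \<Omega>="space MX \<times> space N"
        and A="\<lambda>_. space MX \<times> space N"])
    show "?E \<subseteq> Pow (space MX \<times> space N)"
      using sets.space_closed[of MX] sets.space_closed[of N] by auto
    show "sets ?L = sigma_sets (space MX \<times> space N) ?E"
      by (simp add: sets_pair_measure)
    show "sets ?R = sigma_sets (space MX \<times> space N) ?E"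
      by (simp add: sR sets_pair_measure)
    show "range (\<lambda>_. space MX \<times> space N) \<subseteq> ?E" by auto
    show "(\<Union>i. space MX \<times> space N) = space MX \<times> space N" by simp
    show "emeasure ?L (space MX \<times> space N) \<noteq> \<infinity>" for i :: nat
      by (simp add: emeasure_distr)
    fix S assume "S \<in> ?E"
    then obtain A B where S: "S = A \<times> B" and A: "A \<in> sets MX" and B: "B \<in> sets N" by auto
    have AB: "A \<times> B \<in> sets (MX \<Otimes>\<^sub>M N)" using A B by auto
    have "emeasure ?L S = emeasure M {\<omega>\<in>space M. X \<omega> \<in> A \<and> Y \<omega> \<in> B}"
      using AB by (simp add: S emeasure_distr vimage_def Int_def conj_commute)
    also have "\<dots> = (\<integral>\<^sup>+ x. indicator A x * emeasure (kappa x) B \<partial>(distr M MX X))"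
      by (rule eq[OF A B])
    also have "\<dots> = (\<integral>\<^sup>+ x. emeasure (distr (kappa x) (MX \<Otimes>\<^sub>M N) (\<lambda>y. (x, y))) (A \<times> B) \<partial>(distr M MX X))"
    proof (rule nn_integral_cong)
      fix x assume x: "x \<in> space (distr M MX X)"
      then have x': "x \<in> space MX" by simp
      have sK: "sets (kappa x) = sets N" using Ks x' by (rule sets_kernel)
      have m: "(\<lambda>y. (x, y)) \<in> measurable (kappa x) (MX \<Otimes>\<^sub>M N)"
        by (subst measurable_cong_sets[OF sK refl]) (rule measurable_Pair1'[OF x'])
      have "emeasure (distr (kappa x) (MX \<Otimes>\<^sub>M N) (\<lambda>y. (x, y))) (A \<times> B) =
            emeasure (kappa x) ((\<lambda>y. (x, y)) -` (A \<times> B) \<inter> space (kappa x))"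
        by (rule emeasure_distr[OF m AB])
      also have "\<dots> = indicator A x * emeasure (kappa x) B"
        using sets.sets_into_space[OF B] sets_eq_imp_space_eq[OF sK]
        by (cases "x \<in> A") (auto simp: Int_absorb2)
      finally show "indicator A x * emeasure (kappa x) B = emeasure (distr (kappa x) (MX \<Otimes>\<^sub>M N) (\<lambda>y. (x, y))) (A \<times> B)" ..
    qed
    also have "\<dots> = emeasure ?R S"
      by (simp add: S emeasure_bind[OF ne kern' AB])
    finally show "emeasure ?L S = emeasure ?R S" .
  qed
qed

lemma enn2real_integral:
  fixes f :: "'a \<Rightarrow> ennreal"
  assumes fm: "f \<in> borel_measurable M" and fin: "(\<integral>\<^sup>+x. f x \<partial>M) < \<infinity>"
  shows "integrable M (\<lambda>x. enn2real (f x))" "(\<integral>x. enn2real (f x) \<partial>M) = enn2real (\<integral>\<^sup>+x. f x \<partial>M)"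
proof -
  have ae: "AE x in M. f x \<noteq> \<infinity>" using fm fin by (intro nn_integral_PInf_AE) auto
  have eq: "(\<integral>\<^sup>+x. ennreal (enn2real (f x)) \<partial>M) = (\<integral>\<^sup>+x. f x \<partial>M)"
    using ae by (intro nn_integral_cong_AE) (auto simp: ennreal_enn2real_if)
  have m: "(\<lambda>x. enn2real (f x)) \<in> borel_measurable M" using fm by measurable
  show "integrable M (\<lambda>x. enn2real (f x))"
    by (rule integrableI_bounded[OF m]) (use fin in \<open>simp add: eq\<close>)
  show "(\<integral>x. enn2real (f x) \<partial>M) = enn2real (\<integral>\<^sup>+x. f x \<partial>M)"
    by (subst integral_eq_nn_integral[OF m]) (auto simp: eq)
qed

lemma cond_distr_nn:
  assumes M: "prob_space M" and cd: "is_cond_distr M MX X N Y kappa"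
    and G: "G \<in> borel_measurable (MX \<Otimes>\<^sub>M N)"
  shows "(\<integral>\<^sup>+\<omega>. G (X \<omega>, Y \<omega>) \<partial>M) = (\<integral>\<^sup>+x. (\<integral>\<^sup>+y. G (x, y) \<partial>kappa x) \<partial>distr M MX X)"
proof -
  have X[measurable]: "X \<in> measurable M MX" and Y[measurable]: "Y \<in> measurable M N"
    and K: "kappa \<in> measurable MX (prob_algebra N)"
    using cd by (auto simp: is_cond_distr_def)
  have Ks[measurable]: "kappa \<in> measurable MX (subprob_algebra N)" using K by (rule measurable_prob_algebraD)
  have kern: "(\<lambda>x. distr (kappa x) (MX \<Otimes>\<^sub>M N) (\<lambda>y. (x, y))) \<in> measurable MX (subprob_algebra (MX \<Otimes>\<^sub>M N))"
  proof (rule measurable_distr2[where f="\<lambda>x y. (x, y)", OF _ Ks])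
    show "case_prod (\<lambda>x y. (x, y)) \<in> measurable (MX \<Otimes>\<^sub>M N) (MX \<Otimes>\<^sub>M N)"
      by (simp only: case_prod_Pair measurable_ident)
  qed
  have kern': "(\<lambda>x. distr (kappa x) (MX \<Otimes>\<^sub>M N) (\<lambda>y. (x, y))) \<in> measurable (distr M MX X) (subprob_algebra (MX \<Otimes>\<^sub>M N))"
    by (subst measurable_cong_sets[OF sets_distr refl]) (rule kern)
  have XY: "(\<lambda>\<omega>. (X \<omega>, Y \<omega>)) \<in> measurable M (MX \<Otimes>\<^sub>M N)" by measurable
  have G': "G \<in> borel_measurable (distr M (MX \<Otimes>\<^sub>M N) (\<lambda>\<omega>. (X \<omega>, Y \<omega>)))"
    by (subst measurable_cong_sets[OF sets_distr refl]) (rule G)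
  have "(\<integral>\<^sup>+\<omega>. G (X \<omega>, Y \<omega>) \<partial>M) = (\<integral>\<^sup>+p. G p \<partial>distr M (MX \<Otimes>\<^sub>M N) (\<lambda>\<omega>. (X \<omega>, Y \<omega>)))"
    by (rule nn_integral_distr[OF XY G', symmetric])
  also have "\<dots> = (\<integral>\<^sup>+p. G p \<partial>(distr M MX X \<bind> (\<lambda>x. distr (kappa x) (MX \<Otimes>\<^sub>M N) (\<lambda>y. (x, y)))))"
    by (simp only: cond_distr_measure_eq[OF M cd])
  also have "\<dots> = (\<integral>\<^sup>+x. (\<integral>\<^sup>+p. G p \<partial>distr (kappa x) (MX \<Otimes>\<^sub>M N) (\<lambda>y. (x, y))) \<partial>distr M MX X)"
    by (rule nn_integral_bind[OF G kern'])
  also have "\<dots> = (\<integral>\<^sup>+x. (\<integral>\<^sup>+y. G (x, y) \<partial>kappa x) \<partial>distr M MX X)"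
  proof (rule nn_integral_cong)
    fix x assume "x \<in> space (distr M MX X)"
    then have x': "x \<in> space MX" by simp
    have sK: "sets (kappa x) = sets N" using Ks x' by (rule sets_kernel)
    have m: "(\<lambda>y. (x, y)) \<in> measurable (kappa x) (MX \<Otimes>\<^sub>M N)"
      by (subst measurable_cong_sets[OF sK refl]) (rule measurable_Pair1'[OF x'])
    show "(\<integral>\<^sup>+p. G p \<partial>distr (kappa x) (MX \<Otimes>\<^sub>M N) (\<lambda>y. (x, y))) = (\<integral>\<^sup>+y. G (x, y) \<partial>kappa x)"
      by (rule nn_integral_distr[OF m]) (subst measurable_cong_sets[OF sets_distr refl], rule G)
  qed
  finally show ?thesis .
qed

lemma cond_distr_integral:
  fixes G :: "_ \<Rightarrow> real"
  assumes M: "prob_space M" and cd: "is_cond_distr M MX X N Y kappa"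
    and G[measurable]: "G \<in> borel_measurable (MX \<Otimes>\<^sub>M N)"
    and int: "integrable M (\<lambda>\<omega>. G (X \<omega>, Y \<omega>))"
  shows "integrable (distr M MX X) (\<lambda>x. \<integral>y. G (x, y) \<partial>kappa x)"
    and "(\<integral>\<omega>. G (X \<omega>, Y \<omega>) \<partial>M) = (\<integral>x. (\<integral>y. G (x, y) \<partial>kappa x) \<partial>distr M MX X)"
proof -
  have X[measurable]: "X \<in> measurable M MX" and Y[measurable]: "Y \<in> measurable M N"
    and K: "kappa \<in> measurable MX (prob_algebra N)"
    using cd by (auto simp: is_cond_distr_def)
  have Ks[measurable]: "kappa \<in> measurable MX (subprob_algebra N)" using K by (rule measurable_prob_algebraD)
  define PX where "PX = distr M MX X"
  define h where "h x = (\<integral>y. G (x, y) \<partial>kappa x)" for x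
  define a where "a x = (\<integral>\<^sup>+y. ennreal (G (x, y)) \<partial>kappa x)" for x
  define b where "b x = (\<integral>\<^sup>+y. ennreal (- G (x, y)) \<partial>kappa x)" for x
  define c where "c x = (\<integral>\<^sup>+y. ennreal (norm (G (x, y))) \<partial>kappa x)" for x
  have msets: "\<And>Q. measurable PX Q = measurable MX Q" unfolding PX_def by (rule measurable_cong_sets[OF sets_distr refl])
  have hm: "h \<in> borel_measurable PX" unfolding msets h_def
    by (rule integral_measurable_kernel[where f="\<lambda>x y. G (x, y)", OF _ Ks]) simp
  have am: "a \<in> borel_measurable PX" unfolding msets a_def
    by (rule nn_integral_measurable_subprob_algebra2[where f="\<lambda>x y. ennreal (G (x, y))", OF _ Ks]) simp
  have bm: "b \<in> borel_measurable PX" unfolding msets b_def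
    by (rule nn_integral_measurable_subprob_algebra2[where f="\<lambda>x y. ennreal (- G (x, y))", OF _ Ks]) simp
  have cm: "c \<in> borel_measurable PX" unfolding msets c_def
    by (rule nn_integral_measurable_subprob_algebra2[where f="\<lambda>x y. ennreal (norm (G (x, y)))", OF _ Ks]) simp
  have Gx: "(\<lambda>y. G (x, y)) \<in> borel_measurable (kappa x)" if x: "x \<in> space MX" for x
  proof -
    have sK: "sets (kappa x) = sets N" using Ks x by (rule sets_kernel)
    show ?thesis
      by (subst measurable_cong_sets[OF sK refl]) (rule measurable_compose[OF measurable_Pair1'[OF x] G])
  qed
  have nnc: "(\<integral>\<^sup>+\<omega>. ennreal (norm (G (X \<omega>, Y \<omega>))) \<partial>M) = (\<integral>\<^sup>+x. c x \<partial>PX)"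
    unfolding c_def PX_def by (rule cond_distr_nn[OF M cd, where G="\<lambda>p. ennreal (norm (G p))"]) simp
  have nna: "(\<integral>\<^sup>+\<omega>. ennreal (G (X \<omega>, Y \<omega>)) \<partial>M) = (\<integral>\<^sup>+x. a x \<partial>PX)"
    unfolding a_def PX_def by (rule cond_distr_nn[OF M cd, where G="\<lambda>p. ennreal (G p)"]) simp
  have nnb: "(\<integral>\<^sup>+\<omega>. ennreal (- G (X \<omega>, Y \<omega>)) \<partial>M) = (\<integral>\<^sup>+x. b x \<partial>PX)"
    unfolding b_def PX_def by (rule cond_distr_nn[OF M cd, where G="\<lambda>p. ennreal (- G p)"]) simp
  have cfin: "(\<integral>\<^sup>+x. c x \<partial>PX) < \<infinity>"
    using int unfolding nnc[symmetric] by (simp add: integrable_iff_bounded)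
  have aec: "AE x in PX. c x \<noteq> \<infinity>" using cm cfin by (intro nn_integral_PInf_AE) auto
  have ac: "a x \<le> c x" and bc: "b x \<le> c x" for x
    unfolding a_def b_def c_def by (auto intro!: nn_integral_mono ennreal_leI)
  have afin: "(\<integral>\<^sup>+x. a x \<partial>PX) < \<infinity>"
    using cfin by (rule le_less_trans[rotated]) (intro nn_integral_mono ac)
  have bfin: "(\<integral>\<^sup>+x. b x \<partial>PX) < \<infinity>"
    using cfin by (rule le_less_trans[rotated]) (intro nn_integral_mono bc)
  have hbound: "ennreal (norm (h x)) \<le> c x" for x
  proof (cases "integrable (kappa x) (\<lambda>y. G (x, y))")
    case True then show ?thesis unfolding h_def c_def by (rule integral_norm_bound_ennreal)
  next
    case False then show ?thesis unfolding h_def by (simp add: not_integrable_integral_eq)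
  qed
  have hint: "integrable PX h"
    by (rule integrableI_bounded[OF hm]) (rule le_less_trans[OF nn_integral_mono[OF hbound] cfin])
  then show "integrable (distr M MX X) (\<lambda>x. \<integral>y. G (x, y) \<partial>kappa x)" unfolding PX_def h_def .
  have hae: "AE x in PX. h x = enn2real (a x) - enn2real (b x)"
    using aec AE_space[of PX]
  proof eventually_elim
    case (elim x)
    then have True: "x \<in> space MX" by (simp add: PX_def)
    show ?case
    proof -
      have "integrable (kappa x) (\<lambda>y. G (x, y))"
        using elim Gx[OF True] unfolding c_def by (auto simp: integrable_iff_bounded top.not_eq_extremum)
      then show ?thesis unfolding h_def a_def b_def by (rule real_lebesgue_integral_def)
    qed
  qed
  show "(\<integral>\<omega>. G (X \<omega>, Y \<omega>) \<partial>M) = (\<integral>x. (\<integral>y. G (x, y) \<partial>kappa x) \<partial>distr M MX X)"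
  proof -
    have "(\<integral>\<omega>. G (X \<omega>, Y \<omega>) \<partial>M) = enn2real (\<integral>\<^sup>+x. a x \<partial>PX) - enn2real (\<integral>\<^sup>+x. b x \<partial>PX)"
      by (subst real_lebesgue_integral_def[OF int]) (simp add: nna nnb)
    also have "\<dots> = (\<integral>x. enn2real (a x) \<partial>PX) - (\<integral>x. enn2real (b x) \<partial>PX)"
      using enn2real_integral(2)[OF am afin] enn2real_integral(2)[OF bm bfin] by simp
    also have "\<dots> = (\<integral>x. enn2real (a x) - enn2real (b x) \<partial>PX)"
      using enn2real_integral(1)[OF am afin] enn2real_integral(1)[OF bm bfin] by simp
    also have "\<dots> = (\<integral>x. h x \<partial>PX)"
      using hae hm am bm by (intro integral_cong_AE) (auto elim: AE_mp)
    finally show ?thesis unfolding h_def PX_def .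
  qed
qed

abbreviation "Bern \<equiv> measure_pmf (bernoulli_pmf (1/2))"

lemma sel_comp_meas:
  fixes n :: nat
  assumes "i < n"
  shows "(\<lambda>p. fst p (if snd p i then i + n else i)) \<in> measurable (PiM {..<2*n} (\<lambda>_. PZ) \<Otimes>\<^sub>M PiM {..<n} (\<lambda>_. Bern)) PZ"
proof -
  have 1: "(\<lambda>p. fst p (i + n)) \<in> measurable (PiM {..<2*n} (\<lambda>_. PZ) \<Otimes>\<^sub>M PiM {..<n} (\<lambda>_. Bern)) PZ"
    using assms by (intro measurable_compose[OF measurable_fst measurable_component_singleton]) auto
  have 2: "(\<lambda>p. fst p i) \<in> measurable (PiM {..<2*n} (\<lambda>_. PZ) \<Otimes>\<^sub>M PiM {..<n} (\<lambda>_. Bern)) PZ"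
    using assms by (intro measurable_compose[OF measurable_fst measurable_component_singleton]) auto
  have 3: "(\<lambda>p. snd p i) \<in> measurable (PiM {..<2*n} (\<lambda>_. PZ) \<Otimes>\<^sub>M PiM {..<n} (\<lambda>_. Bern)) (count_space UNIV)"
  proof -
    have "(\<lambda>p. snd p i) \<in> measurable (PiM {..<2*n} (\<lambda>_. PZ) \<Otimes>\<^sub>M PiM {..<n} (\<lambda>_. Bern)) Bern"
      using assms by (intro measurable_compose[OF measurable_snd measurable_component_singleton]) auto
    then show ?thesis by (subst measurable_cong_sets[OF refl, where N'=Bern]) auto
  qed
  have "(\<lambda>p. if snd p i then fst p (i + n) else fst p i) \<in> measurable (PiM {..<2*n} (\<lambda>_. PZ) \<Otimes>\<^sub>M PiM {..<n} (\<lambda>_. Bern)) PZ"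
  proof (rule measurable_If[OF 1 2])
    have "(\<lambda>p. snd p i) -` {True} \<inter> space (PiM {..<2*n} (\<lambda>_. PZ) \<Otimes>\<^sub>M PiM {..<n} (\<lambda>_. Bern)) \<in> sets (PiM {..<2*n} (\<lambda>_. PZ) \<Otimes>\<^sub>M PiM {..<n} (\<lambda>_. Bern))"
      by (rule measurable_sets[OF 3]) simp
    moreover have "(\<lambda>p. snd p i) -` {True} \<inter> space (PiM {..<2*n} (\<lambda>_. PZ) \<Otimes>\<^sub>M PiM {..<n} (\<lambda>_. Bern)) = {p \<in> space (PiM {..<2*n} (\<lambda>_. PZ) \<Otimes>\<^sub>M PiM {..<n} (\<lambda>_. Bern)). snd p i}"
      by auto
    ultimately show "{p \<in> space (PiM {..<2*n} (\<lambda>_. PZ) \<Otimes>\<^sub>M PiM {..<n} (\<lambda>_. Bern)). snd p i} \<in> sets (PiM {..<2*n} (\<lambda>_. PZ) \<Otimes>\<^sub>M PiM {..<n} (\<lambda>_. Bern))"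
      by simp
  qed
  then show ?thesis by (simp add: if_distrib)
qed

lemma sel_meas:
  fixes n :: nat
  shows "(\<lambda>p. sel_sample n (fst p) (snd p)) \<in> measurable (PiM {..<2*n} (\<lambda>_. PZ) \<Otimes>\<^sub>M PiM {..<n} (\<lambda>_. Bern)) (PiM {..<n} (\<lambda>_. PZ))"
  unfolding sel_sample_def
  by (rule measurable_restrict) (rule sel_comp_meas, simp)

context
  fixes PZ :: "'z measure" and n :: nat and K :: "(nat \<Rightarrow> 'z) \<Rightarrow> 'w::polish_space measure"
  assumes PZ: "prob_space PZ"
    and Km: "K \<in> measurable (PiM {..<n} (\<lambda>_. PZ)) (prob_algebra borel)"
begin

abbreviation "PZ2 \<equiv> PiM {..<2*n} (\<lambda>_. PZ)"
abbreviation "Bn \<equiv> PiM {..<n} (\<lambda>_. Bern)"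
abbreviation "TT \<equiv> PZ2 \<Otimes>\<^sub>M (Bn \<Otimes>\<^sub>M (borel :: 'w measure))"

lemma prob_PZ2: "prob_space PZ2"
  by (rule prob_space_PiM) (use PZ in auto)

lemma prob_Bn: "prob_space Bn"
  by (rule prob_space_PiM) (auto intro: prob_space_measure_pmf)

lemma Ksel: "(\<lambda>p. K (sel_sample n (fst p) (snd p))) \<in> measurable (PZ2 \<Otimes>\<^sub>M Bn) (subprob_algebra borel)"
  by (rule measurable_prob_algebraD, rule measurable_compose[OF sel_meas Km])

lemma Ksel_sets: "zt \<in> space PZ2 \<Longrightarrow> u \<in> space Bn \<Longrightarrow> sets (K (sel_sample n zt u)) = sets borel"
  using sets_kernel[OF Ksel, of "(zt, u)"] by (simp add: space_pair_measure)

lemma Ksel_prob: "zt \<in> space PZ2 \<Longrightarrow> u \<in> space Bn \<Longrightarrow> prob_space (K (sel_sample n zt u))"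
  using measurable_space[OF measurable_compose[OF sel_meas Km], of "(zt, u)"]
  by (simp add: space_pair_measure space_prob_algebra)

lemma J_ret: "(\<lambda>x. return TT (fst (fst x), snd (fst x), snd x)) \<in> measurable ((PZ2 \<Otimes>\<^sub>M Bn) \<Otimes>\<^sub>M borel) (subprob_algebra TT)"
proof (rule measurable_compose[OF _ return_measurable])
  show "(\<lambda>x. (fst (fst x), snd (fst x), snd x)) \<in> measurable ((PZ2 \<Otimes>\<^sub>M Bn) \<Otimes>\<^sub>M borel) TT"
    by measurable
qed

lemma J_inner: "(\<lambda>p. K (sel_sample n (fst p) (snd p)) \<bind> (\<lambda>w. return TT (fst p, snd p, w))) \<in> measurable (PZ2 \<Otimes>\<^sub>M Bn) (subprob_algebra TT)"
  by (rule measurable_bind[OF Ksel]) (rule J_ret)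

lemma J_outer: "(\<lambda>zt. Bn \<bind> (\<lambda>u. K (sel_sample n zt u) \<bind> (\<lambda>w. return TT (zt, u, w)))) \<in> measurable PZ2 (subprob_algebra TT)"
proof (rule measurable_bind[where f="\<lambda>_. Bn"])
  show "(\<lambda>_. Bn) \<in> measurable PZ2 (subprob_algebra Bn)"
    by (rule measurable_const) (simp add: space_subprob_algebra prob_Bn prob_space_imp_subprob_space)
  show "(\<lambda>x. K (sel_sample n (fst x) (snd x)) \<bind> (\<lambda>w. return TT (fst x, snd x, w))) \<in> measurable (PZ2 \<Otimes>\<^sub>M Bn) (subprob_algebra TT)"
    by (rule J_inner)
qed

lemma J_mid:
  assumes zt: "zt \<in> space PZ2"
  shows "(\<lambda>u. K (sel_sample n zt u) \<bind> (\<lambda>w. return TT (zt, u, w))) \<in> measurable Bn (subprob_algebra TT)"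
  using measurable_compose[OF measurable_Pair1'[OF zt] J_inner] by simp

lemma J_K:
  assumes zt: "zt \<in> space PZ2" and u: "u \<in> space Bn"
  shows "(\<lambda>w. return TT (zt, u, w)) \<in> measurable (K (sel_sample n zt u)) (subprob_algebra TT)"
proof (subst measurable_cong_sets[OF Ksel_sets[OF zt u] refl])
  have "(\<lambda>w. (zt, u, w)) \<in> measurable borel TT"
    using zt u by measurable
  then show "(\<lambda>w. return TT (zt, u, w)) \<in> measurable borel (subprob_algebra TT)"
    by (rule measurable_compose[OF _ return_measurable])
qed

lemma J_nn:
  assumes f: "f \<in> borel_measurable TT"
  shows "(\<integral>\<^sup>+\<omega>. f \<omega> \<partial>supersample_space PZ n K) =
    (\<integral>\<^sup>+zt. \<integral>\<^sup>+u. \<integral>\<^sup>+w. f (zt, u, w) \<partial>K (sel_sample n zt u) \<partial>Bn \<partial>PZ2)"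
proof -
  have "(\<integral>\<^sup>+\<omega>. f \<omega> \<partial>supersample_space PZ n K) =
     (\<integral>\<^sup>+zt. \<integral>\<^sup>+\<omega>. f \<omega> \<partial>(Bn \<bind> (\<lambda>u. K (sel_sample n zt u) \<bind> (\<lambda>w. return TT (zt, u, w)))) \<partial>PZ2)"
    unfolding supersample_space_def by (rule nn_integral_bind[OF f J_outer])
  also have "\<dots> = (\<integral>\<^sup>+zt. \<integral>\<^sup>+u. \<integral>\<^sup>+w. f (zt, u, w) \<partial>K (sel_sample n zt u) \<partial>Bn \<partial>PZ2)"
  proof (rule nn_integral_cong)
    fix zt assume zt: "zt \<in> space PZ2"
    have "(\<integral>\<^sup>+\<omega>. f \<omega> \<partial>(Bn \<bind> (\<lambda>u. K (sel_sample n zt u) \<bind> (\<lambda>w. return TT (zt, u, w))))) =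
      (\<integral>\<^sup>+u. \<integral>\<^sup>+\<omega>. f \<omega> \<partial>(K (sel_sample n zt u) \<bind> (\<lambda>w. return TT (zt, u, w))) \<partial>Bn)"
      by (rule nn_integral_bind[OF f J_mid[OF zt]])
    also have "\<dots> = (\<integral>\<^sup>+u. \<integral>\<^sup>+w. f (zt, u, w) \<partial>K (sel_sample n zt u) \<partial>Bn)"
    proof (rule nn_integral_cong)
      fix u assume u: "u \<in> space Bn"
      have "(\<integral>\<^sup>+\<omega>. f \<omega> \<partial>(K (sel_sample n zt u) \<bind> (\<lambda>w. return TT (zt, u, w)))) =
        (\<integral>\<^sup>+w. \<integral>\<^sup>+\<omega>. f \<omega> \<partial>return TT (zt, u, w) \<partial>K (sel_sample n zt u))"
        by (rule nn_integral_bind[OF f J_K[OF zt u]])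
      also have "\<dots> = (\<integral>\<^sup>+w. f (zt, u, w) \<partial>K (sel_sample n zt u))"
      proof (rule nn_integral_cong)
        fix w assume "w \<in> space (K (sel_sample n zt u))"
        have "(zt, u, w) \<in> space TT" using zt u by (simp add: space_pair_measure)
        then show "(\<integral>\<^sup>+\<omega>. f \<omega> \<partial>return TT (zt, u, w)) = f (zt, u, w)"
          by (rule nn_integral_return[OF _ f])
      qed
      finally show "(\<integral>\<^sup>+\<omega>. f \<omega> \<partial>(K (sel_sample n zt u) \<bind> (\<lambda>w. return TT (zt, u, w)))) = (\<integral>\<^sup>+w. f (zt, u, w) \<partial>K (sel_sample n zt u))" .
    qed
    finally show "(\<integral>\<^sup>+\<omega>. f \<omega> \<partial>(Bn \<bind> (\<lambda>u. K (sel_sample n zt u) \<bind> (\<lambda>w. return TT (zt, u, w))))) =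
      (\<integral>\<^sup>+u. \<integral>\<^sup>+w. f (zt, u, w) \<partial>K (sel_sample n zt u) \<partial>Bn)" .
  qed
  finally show ?thesis .
qed

abbreviation "JJ \<equiv> supersample_space PZ n K"

lemma J_sets: "sets JJ = sets TT"
  unfolding supersample_space_def
proof (rule sets_bind)
  show "space PZ2 \<noteq> {}" using prob_PZ2 by (rule prob_space.not_empty)
  fix zt assume "zt \<in> space PZ2"
  then show "sets (Bn \<bind> (\<lambda>u. K (sel_sample n zt u) \<bind> (\<lambda>w. return TT (zt, u, w)))) = sets TT"
    by (rule sets_kernel[OF J_outer])
qed

lemma J_space: "space JJ = space TT"
  by (rule sets_eq_imp_space_eq[OF J_sets])

lemma J_nn_indep:
  assumes f: "(\<lambda>p. f (fst p) (snd p)) \<in> borel_measurable (PZ2 \<Otimes>\<^sub>M Bn)"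
  shows "(\<integral>\<^sup>+\<omega>. f (fst \<omega>) (fst (snd \<omega>)) \<partial>JJ) = (\<integral>\<^sup>+zt. \<integral>\<^sup>+u. f zt u \<partial>Bn \<partial>PZ2)"
proof -
  have m: "(\<lambda>\<omega>. (fst \<omega>, fst (snd \<omega>))) \<in> measurable TT (PZ2 \<Otimes>\<^sub>M Bn)" by measurable
  have fm: "(\<lambda>\<omega>. f (fst \<omega>) (fst (snd \<omega>))) \<in> borel_measurable TT"
    using measurable_compose[OF m f] by simp
  show ?thesis
    unfolding J_nn[OF fm]
  proof (intro nn_integral_cong)
    fix zt u assume zt: "zt \<in> space PZ2" and u: "u \<in> space Bn"
    interpret prob_space "K (sel_sample n zt u)" by (rule Ksel_prob[OF zt u])
    show "(\<integral>\<^sup>+w. f (fst (zt, u, w)) (fst (snd (zt, u, w))) \<partial>K (sel_sample n zt u)) = f zt u"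
      by (simp add: emeasure_space_1)
  qed
qed

lemma J_prob: "prob_space JJ"
proof (rule prob_spaceI)
  have "emeasure JJ (space JJ) = (\<integral>\<^sup>+\<omega>. (\<lambda>zt u. 1) (fst \<omega>) (fst (snd \<omega>)) \<partial>JJ)"
    by simp
  also have "\<dots> = (\<integral>\<^sup>+zt. \<integral>\<^sup>+u. 1 \<partial>Bn \<partial>PZ2)"
    by (rule J_nn_indep) simp
  also have "\<dots> = 1"
    using prob_space.emeasure_space_1[OF prob_Bn] prob_space.emeasure_space_1[OF prob_PZ2] by simp
  finally show "emeasure JJ (space JJ) = 1" .
qed

lemma Bern_flip: "(\<integral>\<^sup>+b. \<phi> (\<not> b) \<partial>Bern) = (\<integral>\<^sup>+b. \<phi> b \<partial>Bern)"
  by (subst (1 2) nn_integral_measure_pmf_support[of UNIV]) (auto simp: UNIV_bool add.commute)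

lemma Bn_comp:
  assumes i: "i < n"
  shows "(\<integral>\<^sup>+u. \<psi> (u i) \<partial>Bn) = (\<integral>\<^sup>+b. \<psi> b \<partial>Bern)"
proof -
  have m: "(\<lambda>u. u i) \<in> measurable Bn Bern" using i by (intro measurable_component_singleton) auto
  have pm: "\<psi> \<in> borel_measurable Bern"
    by (subst measurable_cong_sets[OF sets_measure_pmf_count_space refl]) simp
  have "(\<integral>\<^sup>+b. \<psi> b \<partial>Bern) = (\<integral>\<^sup>+b. \<psi> b \<partial>distr Bn Bern (\<lambda>u. u i))"
    using i by (subst distr_PiM_component) (auto intro: prob_space_measure_pmf)
  also have "\<dots> = (\<integral>\<^sup>+u. \<psi> (u i) \<partial>Bn)"
    by (rule nn_integral_distr[OF m]) (subst measurable_cong_sets[OF sets_distr refl], rule pm)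
  finally show ?thesis ..
qed

lemma Bn_flip:
  assumes i: "i < n"
  shows "(\<integral>\<^sup>+u. \<phi> (\<not> u i) \<partial>Bn) = (\<integral>\<^sup>+u. \<phi> (u i) \<partial>Bn)"
  using Bn_comp[OF i, of "\<lambda>b. \<phi> (\<not> b)"] Bn_comp[OF i, of \<phi>] Bern_flip[of \<phi>] by simp

abbreviation "MXX \<equiv> (PZ \<Otimes>\<^sub>M PZ) \<Otimes>\<^sub>M count_space (UNIV :: bool set)"

lemma PB_comp_meas:
  assumes "j < 2 * n"
  shows "(\<lambda>p. fst p j) \<in> measurable (PZ2 \<Otimes>\<^sub>M Bn) PZ"
  using assms by (intro measurable_compose[OF measurable_fst measurable_component_singleton]) auto

lemma PB_bool_meas:
  assumes "i < n"
  shows "(\<lambda>p. snd p i) \<in> measurable (PZ2 \<Otimes>\<^sub>M Bn) (count_space UNIV)"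
proof -
  have "(\<lambda>p. snd p i) \<in> measurable (PZ2 \<Otimes>\<^sub>M Bn) Bern"
    using assms by (intro measurable_compose[OF measurable_snd measurable_component_singleton]) auto
  then show ?thesis by (subst measurable_cong_sets[OF refl, where N'=Bern]) auto
qed

lemma PB_X_meas:
  assumes i: "i < n"
  shows "(\<lambda>p. ((fst p i, fst p (i + n)), snd p i)) \<in> measurable (PZ2 \<Otimes>\<^sub>M Bn) MXX"
    and "(\<lambda>p. ((fst p i, fst p (i + n)), \<not> snd p i)) \<in> measurable (PZ2 \<Otimes>\<^sub>M Bn) MXX"
proof -
  have 1: "(\<lambda>p. fst p i) \<in> measurable (PZ2 \<Otimes>\<^sub>M Bn) PZ" using i by (intro PB_comp_meas) simp
  have 2: "(\<lambda>p. fst p (i + n)) \<in> measurable (PZ2 \<Otimes>\<^sub>M Bn) PZ" using i by (intro PB_comp_meas) simp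
  have 3: "(\<lambda>p. snd p i) \<in> measurable (PZ2 \<Otimes>\<^sub>M Bn) (count_space UNIV)" using i by (rule PB_bool_meas)
  have 4: "(\<lambda>p. \<not> snd p i) \<in> measurable (PZ2 \<Otimes>\<^sub>M Bn) (count_space UNIV)"
    using measurable_compose[OF 3, of Not "count_space UNIV"] by simp
  show "(\<lambda>p. ((fst p i, fst p (i + n)), snd p i)) \<in> measurable (PZ2 \<Otimes>\<^sub>M Bn) MXX"
    by (intro measurable_Pair 1 2 3)
  show "(\<lambda>p. ((fst p i, fst p (i + n)), \<not> snd p i)) \<in> measurable (PZ2 \<Otimes>\<^sub>M Bn) MXX"
    by (intro measurable_Pair 1 2 4)
qed

lemma TT_PB: "(\<lambda>\<omega>. (fst \<omega>, fst (snd \<omega>))) \<in> measurable TT (PZ2 \<Otimes>\<^sub>M Bn)" by measurable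

lemma TT_X_meas:
  assumes i: "i < n"
  shows "(\<lambda>\<omega>. ((fst \<omega> i, fst \<omega> (i + n)), fst (snd \<omega>) i)) \<in> measurable TT MXX"
    and "(\<lambda>\<omega>. ((fst \<omega> i, fst \<omega> (i + n)), \<not> fst (snd \<omega>) i)) \<in> measurable TT MXX"
  using measurable_compose[OF TT_PB PB_X_meas(1)[OF i]] measurable_compose[OF TT_PB PB_X_meas(2)[OF i]]
  by simp_all

lemma emeasure_distr_nn:
  assumes g: "g \<in> measurable M N" and A: "A \<in> sets N"
  shows "emeasure (distr M N g) A = (\<integral>\<^sup>+x. indicator A (g x) \<partial>M)"
proof -
  have "emeasure (distr M N g) A = (\<integral>\<^sup>+x. indicator A x \<partial>distr M N g)"
    using A by simp
  also have "\<dots> = (\<integral>\<^sup>+x. indicator A (g x) \<partial>M)"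
    using A by (intro nn_integral_distr[OF g]) simp
  finally show ?thesis .
qed

lemma J_flip:
  assumes i: "i < n"
  shows "distr JJ MXX (\<lambda>\<omega>. ((fst \<omega> i, fst \<omega> (i + n)), \<not> fst (snd \<omega>) i)) =
         distr JJ MXX (\<lambda>\<omega>. ((fst \<omega> i, fst \<omega> (i + n)), fst (snd \<omega>) i))"
proof (rule measure_eqI)
  have g0: "(\<lambda>\<omega>. ((fst \<omega> i, fst \<omega> (i + n)), fst (snd \<omega>) i)) \<in> measurable JJ MXX"
    by (subst measurable_cong_sets[OF J_sets refl]) (rule TT_X_meas(1)[OF i])
  have g1: "(\<lambda>\<omega>. ((fst \<omega> i, fst \<omega> (i + n)), \<not> fst (snd \<omega>) i)) \<in> measurable JJ MXX"
    by (subst measurable_cong_sets[OF J_sets refl]) (rule TT_X_meas(2)[OF i])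
  show "sets (distr JJ MXX (\<lambda>\<omega>. ((fst \<omega> i, fst \<omega> (i + n)), \<not> fst (snd \<omega>) i))) =
        sets (distr JJ MXX (\<lambda>\<omega>. ((fst \<omega> i, fst \<omega> (i + n)), fst (snd \<omega>) i)))" by simp
  fix A assume "A \<in> sets (distr JJ MXX (\<lambda>\<omega>. ((fst \<omega> i, fst \<omega> (i + n)), \<not> fst (snd \<omega>) i)))"
  then have A: "A \<in> sets MXX" by simp
  have m1: "(\<lambda>p. (\<lambda>zt u. indicator A ((zt i, zt (i + n)), \<not> u i) :: ennreal) (fst p) (snd p)) \<in> borel_measurable (PZ2 \<Otimes>\<^sub>M Bn)"
    using measurable_compose[OF PB_X_meas(2)[OF i] borel_measurable_indicator[OF A]] by simp
  have m0: "(\<lambda>p. (\<lambda>zt u. indicator A ((zt i, zt (i + n)), u i) :: ennreal) (fst p) (snd p)) \<in> borel_measurable (PZ2 \<Otimes>\<^sub>M Bn)"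
    using measurable_compose[OF PB_X_meas(1)[OF i] borel_measurable_indicator[OF A]] by simp
  have "emeasure (distr JJ MXX (\<lambda>\<omega>. ((fst \<omega> i, fst \<omega> (i + n)), \<not> fst (snd \<omega>) i))) A
      = (\<integral>\<^sup>+\<omega>. (\<lambda>zt u. indicator A ((zt i, zt (i + n)), \<not> u i)) (fst \<omega>) (fst (snd \<omega>)) \<partial>JJ)"
    by (simp add: emeasure_distr_nn[OF g1 A])
  also have "\<dots> = (\<integral>\<^sup>+zt. \<integral>\<^sup>+u. indicator A ((zt i, zt (i + n)), \<not> u i) \<partial>Bn \<partial>PZ2)"
    by (rule J_nn_indep[OF m1])
  also have "\<dots> = (\<integral>\<^sup>+zt. \<integral>\<^sup>+u. indicator A ((zt i, zt (i + n)), u i) \<partial>Bn \<partial>PZ2)"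
    by (intro nn_integral_cong Bn_flip[OF i, where \<phi>="\<lambda>b. indicator A ((_ i, _ (i + n)), b)"])
  also have "\<dots> = (\<integral>\<^sup>+\<omega>. (\<lambda>zt u. indicator A ((zt i, zt (i + n)), u i)) (fst \<omega>) (fst (snd \<omega>)) \<partial>JJ)"
    by (rule J_nn_indep[OF m0, symmetric])
  also have "\<dots> = emeasure (distr JJ MXX (\<lambda>\<omega>. ((fst \<omega> i, fst \<omega> (i + n)), fst (snd \<omega>) i))) A"
    by (simp add: emeasure_distr_nn[OF g0 A])
  finally show "emeasure (distr JJ MXX (\<lambda>\<omega>. ((fst \<omega> i, fst \<omega> (i + n)), \<not> fst (snd \<omega>) i))) A =
        emeasure (distr JJ MXX (\<lambda>\<omega>. ((fst \<omega> i, fst \<omega> (i + n)), fst (snd \<omega>) i))) A" .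
qed

lemma cond_comp_meas:
  assumes i: "i < n" and a: "a < 2 * n" and b: "b < 2 * n"
  shows "(\<lambda>p. fst p (if snd p i then a else b)) \<in> measurable (PZ2 \<Otimes>\<^sub>M Bn) PZ"
proof -
  have 1: "(\<lambda>p. fst p a) \<in> measurable (PZ2 \<Otimes>\<^sub>M Bn) PZ" using a by (rule PB_comp_meas)
  have 2: "(\<lambda>p. fst p b) \<in> measurable (PZ2 \<Otimes>\<^sub>M Bn) PZ" using b by (rule PB_comp_meas)
  have 3: "(\<lambda>p. snd p i) \<in> measurable (PZ2 \<Otimes>\<^sub>M Bn) (count_space UNIV)" using i by (rule PB_bool_meas)
  have "(\<lambda>p. if snd p i then fst p a else fst p b) \<in> measurable (PZ2 \<Otimes>\<^sub>M Bn) PZ"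
  proof (rule measurable_If[OF 1 2])
    have "(\<lambda>p. snd p i) -` {True} \<inter> space (PZ2 \<Otimes>\<^sub>M Bn) \<in> sets (PZ2 \<Otimes>\<^sub>M Bn)"
      by (rule measurable_sets[OF 3]) simp
    moreover have "(\<lambda>p. snd p i) -` {True} \<inter> space (PZ2 \<Otimes>\<^sub>M Bn) = {p \<in> space (PZ2 \<Otimes>\<^sub>M Bn). snd p i}"
      by auto
    ultimately show "{p \<in> space (PZ2 \<Otimes>\<^sub>M Bn). snd p i} \<in> sets (PZ2 \<Otimes>\<^sub>M Bn)"
      by simp
  qed
  then show ?thesis by (simp add: if_distrib)
qed

lemma sel_meas_I:
  assumes "\<And>k. k < n \<Longrightarrow> (if u k then k + n else k) \<in> I"
  shows "(\<lambda>x. sel_sample n x u) \<in> measurable (PiM I (\<lambda>_. PZ)) (PiM {..<n} (\<lambda>_. PZ))"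
  unfolding sel_sample_def
  by (rule measurable_restrict) (rule measurable_component_singleton, use assms in simp)

lemma ghost_indep:
  assumes i: "i < n"
    and \<phi>: "\<phi> \<in> borel_measurable PZ"
    and F: "F \<in> borel_measurable (PiM {..<n} (\<lambda>_. PZ))"
  shows "(\<integral>\<^sup>+zt. \<phi> (zt (if u i then i else i + n)) * F (sel_sample n zt u) \<partial>PZ2) =
         (\<integral>\<^sup>+z. \<phi> z \<partial>PZ) * (\<integral>\<^sup>+zt. F (sel_sample n zt u) \<partial>PZ2)"
proof -
  define j where "j = (if u i then i else i + n)"
  define R where "R = {..<2*n} - {j}"
  have jR: "j \<notin> R" and fR: "finite R" and ins: "insert j R = {..<2*n}"
    using i by (auto simp: R_def j_def)
  have idx: "(if u k then k + n else k) \<in> R" if "k < n" for k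
    using that i by (auto simp: R_def j_def)
  have idx2: "(if u k then k + n else k) \<in> {..<2*n}" if "k < n" for k
    using that by auto
  have selR: "(\<lambda>x. sel_sample n x u) \<in> measurable (PiM R (\<lambda>_. PZ)) (PiM {..<n} (\<lambda>_. PZ))"
    by (rule sel_meas_I) (rule idx)
  have sel2: "(\<lambda>x. sel_sample n x u) \<in> measurable PZ2 (PiM {..<n} (\<lambda>_. PZ))"
    by (rule sel_meas_I) (rule idx2)
  have upd: "sel_sample n (x(j := y)) u = sel_sample n x u" for x y
    unfolding sel_sample_def
  proof (rule restrict_ext)
    fix k assume "k \<in> {..<n}"
    then show "(x(j := y)) (if u k then k + n else k) = x (if u k then k + n else k)"
      using idx[of k] jR by (cases "u k") auto
  qed
  interpret product_sigma_finite "\<lambda>_. PZ"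
    unfolding product_sigma_finite_def using prob_space_imp_sigma_finite[OF PZ] by simp
  have gen: "(\<integral>\<^sup>+zt. \<psi> (zt j) * F (sel_sample n zt u) \<partial>PZ2) =
         (\<integral>\<^sup>+z. \<psi> z \<partial>PZ) * (\<integral>\<^sup>+x. F (sel_sample n x u) \<partial>PiM R (\<lambda>_. PZ))"
    if \<psi>: "\<psi> \<in> borel_measurable PZ" for \<psi>
  proof -
    have fm: "(\<lambda>zt. \<psi> (zt j) * F (sel_sample n zt u)) \<in> borel_measurable (PiM (insert j R) (\<lambda>_. PZ))"
      unfolding ins
    proof (rule borel_measurable_times_ennreal)
      show "(\<lambda>zt. \<psi> (zt j)) \<in> borel_measurable PZ2"
      proof (rule measurable_compose[OF _ \<psi>])
        show "(\<lambda>zt. zt j) \<in> measurable PZ2 PZ"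
          using i by (intro measurable_component_singleton) (auto simp: j_def)
      qed
      show "(\<lambda>zt. F (sel_sample n zt u)) \<in> borel_measurable PZ2"
        by (rule measurable_compose[OF sel2 F])
    qed
    have Fm: "(\<lambda>x. F (sel_sample n x u)) \<in> borel_measurable (PiM R (\<lambda>_. PZ))"
      by (rule measurable_compose[OF selR F])
    have "(\<integral>\<^sup>+zt. \<psi> (zt j) * F (sel_sample n zt u) \<partial>PZ2) =
          (\<integral>\<^sup>+zt. \<psi> (zt j) * F (sel_sample n zt u) \<partial>PiM (insert j R) (\<lambda>_. PZ))"
      by (simp only: ins)
    also have "\<dots> = (\<integral>\<^sup>+x. (\<integral>\<^sup>+y. \<psi> ((x(j := y)) j) * F (sel_sample n (x(j := y)) u) \<partial>PZ) \<partial>PiM R (\<lambda>_. PZ))"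
      by (rule product_nn_integral_insert[OF fR jR fm])
    also have "\<dots> = (\<integral>\<^sup>+x. (\<integral>\<^sup>+y. \<psi> y * F (sel_sample n x u) \<partial>PZ) \<partial>PiM R (\<lambda>_. PZ))"
      by (simp add: upd)
    also have "\<dots> = (\<integral>\<^sup>+x. (\<integral>\<^sup>+y. \<psi> y \<partial>PZ) * F (sel_sample n x u) \<partial>PiM R (\<lambda>_. PZ))"
      by (intro nn_integral_cong nn_integral_multc \<psi>)
    also have "\<dots> = (\<integral>\<^sup>+z. \<psi> z \<partial>PZ) * (\<integral>\<^sup>+x. F (sel_sample n x u) \<partial>PiM R (\<lambda>_. PZ))"
      by (rule nn_integral_cmult[OF Fm])
    finally show ?thesis .
  qed
  have one: "(\<integral>\<^sup>+zt. F (sel_sample n zt u) \<partial>PZ2) = (\<integral>\<^sup>+x. F (sel_sample n x u) \<partial>PiM R (\<lambda>_. PZ))"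
    using gen[of "\<lambda>_. 1"] prob_space.emeasure_space_1[OF PZ] by simp
  show ?thesis
    unfolding j_def[symmetric] gen[OF \<phi>] one ..
qed

lemma J_indep:
  assumes i: "i < n"
  shows "distr JJ borel (\<lambda>\<omega>. snd (snd \<omega>)) \<Otimes>\<^sub>M PZ =
         distr JJ (borel \<Otimes>\<^sub>M PZ) (\<lambda>\<omega>. (snd (snd \<omega>), fst \<omega> (if fst (snd \<omega>) i then i else i + n)))"
proof (rule pair_measure_eqI)
  have Wm: "(\<lambda>\<omega>. snd (snd \<omega>)) \<in> measurable JJ borel"
    by (subst measurable_cong_sets[OF J_sets refl]) measurable
  have Zm': "(\<lambda>p. fst p (if snd p i then i else i + n)) \<in> measurable (PZ2 \<Otimes>\<^sub>M Bn) PZ"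
    using i by (intro cond_comp_meas) auto
  have Zm: "(\<lambda>\<omega>. fst \<omega> (if fst (snd \<omega>) i then i else i + n)) \<in> measurable JJ PZ"
    by (subst measurable_cong_sets[OF J_sets refl]) (rule measurable_compose[OF TT_PB Zm', simplified])
  have Vm: "(\<lambda>\<omega>. (snd (snd \<omega>), fst \<omega> (if fst (snd \<omega>) i then i else i + n))) \<in> measurable JJ (borel \<Otimes>\<^sub>M PZ)"
    by (rule measurable_Pair[OF Wm Zm])
  show "sigma_finite_measure (distr JJ borel (\<lambda>\<omega>. snd (snd \<omega>)))"
    by (rule prob_space_imp_sigma_finite, rule prob_space.prob_space_distr[OF J_prob Wm])
  show "sigma_finite_measure PZ" by (rule prob_space_imp_sigma_finite[OF PZ])
  show "sets (distr JJ borel (\<lambda>\<omega>. snd (snd \<omega>)) \<Otimes>\<^sub>M PZ) =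
        sets (distr JJ (borel \<Otimes>\<^sub>M PZ) (\<lambda>\<omega>. (snd (snd \<omega>), fst \<omega> (if fst (snd \<omega>) i then i else i + n))))"
    by (simp only: sets_distr sets_pair_measure_cong[OF sets_distr refl])
  fix A B assume "A \<in> sets (distr JJ borel (\<lambda>\<omega>. snd (snd \<omega>)))" and B: "B \<in> sets PZ"
  then have A: "A \<in> sets borel" by simp
  define G where "G zt u = emeasure (K (sel_sample n zt u)) A" for zt u
  have Gm: "(\<lambda>p. G (fst p) (snd p)) \<in> borel_measurable (PZ2 \<Otimes>\<^sub>M Bn)"
    unfolding G_def using measurable_compose[OF Ksel measurable_emeasure_subprob_algebra[OF A]] by simp
  have Fm: "(\<lambda>s. emeasure (K s) A) \<in> borel_measurable (PiM {..<n} (\<lambda>_. PZ))"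
    using measurable_compose[OF measurable_prob_algebraD[OF Km] measurable_emeasure_subprob_algebra[OF A]] by simp
  have Hm: "(\<lambda>p. indicator B (fst p (if snd p i then i else i + n)) * G (fst p) (snd p)) \<in> borel_measurable (PZ2 \<Otimes>\<^sub>M Bn)"
    by (intro borel_measurable_times_ennreal Gm measurable_compose[OF Zm' borel_measurable_indicator[OF B]])
  interpret PB: pair_sigma_finite PZ2 Bn
    by (intro pair_sigma_finite.intro prob_space_imp_sigma_finite prob_PZ2 prob_Bn)
  have KA: "(\<integral>\<^sup>+w. indicator A w \<partial>K (sel_sample n zt u)) = G zt u" if "zt \<in> space PZ2" "u \<in> space Bn" for zt u
    using A Ksel_sets[OF that] unfolding G_def by (intro nn_integral_indicator) simp
  have "emeasure (distr JJ borel (\<lambda>\<omega>. snd (snd \<omega>))) A = (\<integral>\<^sup>+\<omega>. indicator A (snd (snd \<omega>)) \<partial>JJ)"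
    by (rule emeasure_distr_nn[OF Wm A])
  also have "\<dots> = (\<integral>\<^sup>+zt. \<integral>\<^sup>+u. \<integral>\<^sup>+w. indicator A w \<partial>K (sel_sample n zt u) \<partial>Bn \<partial>PZ2)"
    using J_nn[of "\<lambda>\<omega>. indicator A (snd (snd \<omega>))"] A by simp
  also have "\<dots> = (\<integral>\<^sup>+zt. \<integral>\<^sup>+u. G zt u \<partial>Bn \<partial>PZ2)"
    by (intro nn_integral_cong KA)
  finally have L: "emeasure (distr JJ borel (\<lambda>\<omega>. snd (snd \<omega>))) A = (\<integral>\<^sup>+zt. \<integral>\<^sup>+u. G zt u \<partial>Bn \<partial>PZ2)" .
  have AB: "A \<times> B \<in> sets (borel \<Otimes>\<^sub>M PZ)" using A B by simp
  have "emeasure (distr JJ (borel \<Otimes>\<^sub>M PZ) (\<lambda>\<omega>. (snd (snd \<omega>), fst \<omega> (if fst (snd \<omega>) i then i else i + n)))) (A \<times> B)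
      = (\<integral>\<^sup>+\<omega>. indicator (A \<times> B) (snd (snd \<omega>), fst \<omega> (if fst (snd \<omega>) i then i else i + n)) \<partial>JJ)"
    by (rule emeasure_distr_nn[OF Vm AB])
  also have "\<dots> = (\<integral>\<^sup>+zt. \<integral>\<^sup>+u. \<integral>\<^sup>+w. indicator (A \<times> B) (w, zt (if u i then i else i + n)) \<partial>K (sel_sample n zt u) \<partial>Bn \<partial>PZ2)"
  proof -
    have "(\<lambda>\<omega>. indicator (A \<times> B) (snd (snd \<omega>), fst \<omega> (if fst (snd \<omega>) i then i else i + n)) :: ennreal) \<in> borel_measurable TT"
      using measurable_compose[OF Vm borel_measurable_indicator[OF AB]]
      by (simp add: measurable_cong_sets[OF J_sets refl])
    from J_nn[OF this] show ?thesis by simp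
  qed
  also have "\<dots> = (\<integral>\<^sup>+zt. \<integral>\<^sup>+u. indicator B (zt (if u i then i else i + n)) * G zt u \<partial>Bn \<partial>PZ2)"
  proof (intro nn_integral_cong)
    fix zt u assume zt: "zt \<in> space PZ2" and u: "u \<in> space Bn"
    have "(\<integral>\<^sup>+w. indicator (A \<times> B) (w, zt (if u i then i else i + n)) \<partial>K (sel_sample n zt u))
        = (\<integral>\<^sup>+w. indicator B (zt (if u i then i else i + n)) * indicator A w \<partial>K (sel_sample n zt u))"
      by (intro nn_integral_cong) (simp add: indicator_times mult.commute)
    also have "\<dots> = indicator B (zt (if u i then i else i + n)) * G zt u"
      using A Ksel_sets[OF zt u] by (subst nn_integral_cmult) (auto simp: KA[OF zt u])
    finally show "(\<integral>\<^sup>+w. indicator (A \<times> B) (w, zt (if u i then i else i + n)) \<partial>K (sel_sample n zt u))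
        = indicator B (zt (if u i then i else i + n)) * G zt u" .
  qed
  also have "\<dots> = (\<integral>\<^sup>+u. \<integral>\<^sup>+zt. indicator B (zt (if u i then i else i + n)) * G zt u \<partial>PZ2 \<partial>Bn)"
    using PB.Fubini'[of "\<lambda>zt u. indicator B (zt (if u i then i else i + n)) * G zt u"] Hm
    by (simp add: case_prod_beta')
  also have "\<dots> = (\<integral>\<^sup>+u. emeasure PZ B * \<integral>\<^sup>+zt. G zt u \<partial>PZ2 \<partial>Bn)"
  proof (intro nn_integral_cong)
    fix u
    show "(\<integral>\<^sup>+zt. indicator B (zt (if u i then i else i + n)) * G zt u \<partial>PZ2) = emeasure PZ B * \<integral>\<^sup>+zt. G zt u \<partial>PZ2"
      unfolding G_def using ghost_indep[OF i borel_measurable_indicator[OF B] Fm, of u] B by simp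
  qed
  also have "\<dots> = emeasure PZ B * (\<integral>\<^sup>+u. \<integral>\<^sup>+zt. G zt u \<partial>PZ2 \<partial>Bn)"
  proof (rule nn_integral_cmult)
    show "(\<lambda>u. \<integral>\<^sup>+zt. G zt u \<partial>PZ2) \<in> borel_measurable Bn"
    proof -
      have "(\<lambda>p. G (snd p) (fst p)) \<in> borel_measurable (Bn \<Otimes>\<^sub>M PZ2)"
        using measurable_compose[OF measurable_pair_swap' Gm] by (simp add: case_prod_beta')
      from PB.M1.borel_measurable_nn_integral_fst[OF this]
      show ?thesis by simp
    qed
  qed
  also have "\<dots> = emeasure PZ B * (\<integral>\<^sup>+zt. \<integral>\<^sup>+u. G zt u \<partial>Bn \<partial>PZ2)"
    using PB.Fubini'[of G] Gm by (simp add: case_prod_beta')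
  finally show "emeasure (distr JJ borel (\<lambda>\<omega>. snd (snd \<omega>))) A * emeasure PZ B =
    emeasure (distr JJ (borel \<Otimes>\<^sub>M PZ) (\<lambda>\<omega>. (snd (snd \<omega>), fst \<omega> (if fst (snd \<omega>) i then i else i + n)))) (A \<times> B)"
    unfolding L by (simp add: mult.commute)
qed

end

lemma pw_bound:
  fixes loss :: "'w::polish_space \<Rightarrow> 'z \<Rightarrow> real" and s :: real
  assumes P: "prob_space P" "sets P = sets borel"
    and Q: "prob_space Q" "sets Q = sets borel"
    and L: "L > 0" and s: "\<bar>s\<bar> = 1"
    and la: "L-lipschitz_on UNIV (\<lambda>w. loss w a)" and lb: "L-lipschitz_on UNIV (\<lambda>w. loss w b)"
  shows "ennreal (\<bar>(\<integral>w. s * (loss w a - loss w b) \<partial>P) - (\<integral>w. s * (loss w a - loss w b) \<partial>Q)\<bar> / (2 * L))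
           \<le> wasserstein1 P Q"
proof -
  define f where "f w = s * (loss w a - loss w b) / (2 * L)" for w
  have "1-lipschitz_on UNIV f"
  proof (rule lipschitz_onI)
    fix x y :: 'w
    have e: "f x - f y = s * ((loss x a - loss y a) - (loss x b - loss y b)) / (2 * L)"
      unfolding f_def using L by (simp add: field_simps)
    have "dist (f x) (f y) = \<bar>s\<bar> * \<bar>(loss x a - loss y a) - (loss x b - loss y b)\<bar> / (2 * L)"
      unfolding dist_real_def e using L by (simp add: abs_mult abs_divide)
    moreover have "\<bar>(loss x a - loss y a) - (loss x b - loss y b)\<bar> / (2 * L) \<le> dist x y"
    proof -
      have "\<bar>loss x a - loss y a\<bar> \<le> L * dist x y" using lipschitz_onD[OF la] by (simp add: dist_real_def)
      moreover have "\<bar>loss x b - loss y b\<bar> \<le> L * dist x y" using lipschitz_onD[OF lb] by (simp add: dist_real_def)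
      ultimately have "\<bar>(loss x a - loss y a) - (loss x b - loss y b)\<bar> \<le> L * dist x y + L * dist x y" by linarith
      then have "\<bar>(loss x a - loss y a) - (loss x b - loss y b)\<bar> \<le> dist x y * (2 * L)" by (simp add: algebra_simps)
      then show ?thesis using L by (simp add: pos_divide_le_eq)
    qed
    ultimately show "dist (f x) (f y) \<le> 1 * dist x y" using s by simp
  qed simp
  from wass_bound[OF P Q this]
  have "ennreal \<bar>(\<integral>x. f x \<partial>P) - (\<integral>x. f x \<partial>Q)\<bar> \<le> wasserstein1 P Q" .
  moreover have "\<bar>(\<integral>x. f x \<partial>P) - (\<integral>x. f x \<partial>Q)\<bar> = \<bar>(\<integral>w. s * (loss w a - loss w b) \<partial>P) - (\<integral>w. s * (loss w a - loss w b) \<partial>Q)\<bar> / (2 * L)"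
    using L unfolding f_def integral_divide_zero by (simp add: abs_divide flip: diff_divide_distrib)
  ultimately show ?thesis by simp
qed

lemma per_i:
  fixes PZ :: "'z measure" and n :: nat and K :: "(nat \<Rightarrow> 'z) \<Rightarrow> 'w::polish_space measure"
    and loss :: "'w \<Rightarrow> 'z \<Rightarrow> real" and L :: real
    and kap :: "('z \<times> 'z) \<times> bool \<Rightarrow> 'w measure" and mu :: "'z \<times> 'z \<Rightarrow> 'w measure"
  assumes PZ: "prob_space PZ"
    and Km: "K \<in> measurable (PiM {..<n} (\<lambda>_. PZ)) (prob_algebra borel)"
    and loss_meas: "(\<lambda>(w, z). loss w z) \<in> borel_measurable (borel \<Otimes>\<^sub>M PZ)"
    and lip: "\<forall>z\<in>space PZ. L-lipschitz_on UNIV (\<lambda>w. loss w z)"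
    and i: "i < n"
    and kap: "is_cond_distr (supersample_space PZ n K) ((PZ \<Otimes>\<^sub>M PZ) \<Otimes>\<^sub>M count_space UNIV)
                   (\<lambda>\<omega>. ((fst \<omega> i, fst \<omega> (i + n)), fst (snd \<omega>) i)) borel (\<lambda>\<omega>. snd (snd \<omega>)) kap"
    and mu: "is_cond_distr (supersample_space PZ n K) (PZ \<Otimes>\<^sub>M PZ)
                   (\<lambda>\<omega>. (fst \<omega> i, fst \<omega> (i + n))) borel (\<lambda>\<omega>. snd (snd \<omega>)) mu"
    and int1: "integrable (supersample_space PZ n K) (\<lambda>\<omega>. loss (snd (snd \<omega>)) (fst \<omega> (if fst (snd \<omega>) i then i else i + n)))"
    and int2: "integrable (supersample_space PZ n K) (\<lambda>\<omega>. loss (snd (snd \<omega>)) (sel_sample n (fst \<omega>) (fst (snd \<omega>)) i))"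
  shows "ennreal \<bar>\<integral>\<omega>. loss (snd (snd \<omega>)) (fst \<omega> (if fst (snd \<omega>) i then i else i + n))
                     - loss (snd (snd \<omega>)) (sel_sample n (fst \<omega>) (fst (snd \<omega>)) i) \<partial>supersample_space PZ n K\<bar>
         \<le> ennreal (2 * L) * (\<integral>\<^sup>+\<omega>. wasserstein1 (kap ((fst \<omega> i, fst \<omega> (i + n)), fst (snd \<omega>) i))
                                         (mu (fst \<omega> i, fst \<omega> (i + n))) \<partial>supersample_space PZ n K)"
proof -
  define J where "J = supersample_space PZ n K"
  define MX where "MX = (PZ \<Otimes>\<^sub>M PZ) \<Otimes>\<^sub>M count_space (UNIV :: bool set)"
  define X where "X \<omega> = ((fst \<omega> i, fst \<omega> (i + n)), fst (snd \<omega>) i)" for \<omega> :: "(nat \<Rightarrow> 'z) \<times> (nat \<Rightarrow> bool) \<times> 'w"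
  define Xf where "Xf \<omega> = ((fst \<omega> i, fst \<omega> (i + n)), \<not> fst (snd \<omega>) i)" for \<omega> :: "(nat \<Rightarrow> 'z) \<times> (nat \<Rightarrow> bool) \<times> 'w"
  define W where "W \<omega> = snd (snd \<omega>)" for \<omega> :: "(nat \<Rightarrow> 'z) \<times> (nat \<Rightarrow> bool) \<times> 'w"
  define G where "G p = (if snd (fst p) then 1 else -1) * (loss (snd p) (fst (fst (fst p))) - loss (snd p) (snd (fst (fst p))))"
    for p :: "(('z \<times> 'z) \<times> bool) \<times> 'w"
  define PX where "PX = distr J MX X"
  define hk where "hk x = (\<integral>w. G (x, w) \<partial>kap x)" for x
  define hm where "hm x = (\<integral>w. G (x, w) \<partial>mu (fst x))" for x
  have Jp: "prob_space J" unfolding J_def by (rule J_prob[OF PZ Km])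
  have sJ: "sets J = sets (PiM {..<2*n} (\<lambda>_. PZ) \<Otimes>\<^sub>M (PiM {..<n} (\<lambda>_. Bern) \<Otimes>\<^sub>M borel))"
    unfolding J_def by (rule J_sets[OF PZ Km])
  have spJ: "space J = space (PiM {..<2*n} (\<lambda>_. PZ) \<Otimes>\<^sub>M (PiM {..<n} (\<lambda>_. Bern) \<Otimes>\<^sub>M borel))"
    unfolding J_def by (rule J_space[OF PZ Km])
  have Xm: "X \<in> measurable J MX" unfolding X_def MX_def
    by (subst measurable_cong_sets[OF sJ refl]) (rule TT_X_meas(1)[OF PZ Km i])
  have Xfm: "Xf \<in> measurable J MX" unfolding Xf_def MX_def
    by (subst measurable_cong_sets[OF sJ refl]) (rule TT_X_meas(2)[OF PZ Km i])
  have kapm: "kap \<in> measurable MX (prob_algebra borel)" using kap unfolding MX_def by (simp add: is_cond_distr_def)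
  have mum: "mu \<in> measurable (PZ \<Otimes>\<^sub>M PZ) (prob_algebra borel)" using mu by (simp add: is_cond_distr_def)
  have kap': "is_cond_distr J MX X borel W kap" using kap unfolding J_def MX_def X_def W_def .
  have Gm: "G \<in> borel_measurable (MX \<Otimes>\<^sub>M borel)"
  proof -
    have la: "(\<lambda>p. loss (snd p) (fst (fst (fst p)))) \<in> borel_measurable (MX \<Otimes>\<^sub>M borel)"
    proof -
      have "(\<lambda>p. (snd p, fst (fst (fst p)))) \<in> measurable (MX \<Otimes>\<^sub>M borel) (borel \<Otimes>\<^sub>M PZ)"
        unfolding MX_def by measurable
      from measurable_compose[OF this loss_meas] show ?thesis by simp
    qed
    have lb: "(\<lambda>p. loss (snd p) (snd (fst (fst p)))) \<in> borel_measurable (MX \<Otimes>\<^sub>M borel)"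
    proof -
      have "(\<lambda>p. (snd p, snd (fst (fst p)))) \<in> measurable (MX \<Otimes>\<^sub>M borel) (borel \<Otimes>\<^sub>M PZ)"
        unfolding MX_def by measurable
      from measurable_compose[OF this loss_meas] show ?thesis by simp
    qed
    have sg: "(\<lambda>p. if snd (fst p) then 1 else -1 :: real) \<in> borel_measurable (MX \<Otimes>\<^sub>M borel)"
    proof -
      have "(\<lambda>p. snd (fst p)) \<in> measurable (MX \<Otimes>\<^sub>M borel) (count_space UNIV)"
        unfolding MX_def by measurable
      from measurable_compose[OF this, of "\<lambda>b. if b then 1 else -1 :: real" borel] show ?thesis by simp
    qed
    show ?thesis unfolding G_def by (intro borel_measurable_times sg borel_measurable_diff la lb)
  qed
  have Gpt: "G (X \<omega>, W \<omega>) = loss (snd (snd \<omega>)) (fst \<omega> (if fst (snd \<omega>) i then i else i + n))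
                     - loss (snd (snd \<omega>)) (sel_sample n (fst \<omega>) (fst (snd \<omega>)) i)" for \<omega>
    using i by (simp add: G_def X_def W_def sel_sample_def)
  have intG: "integrable J (\<lambda>\<omega>. G (X \<omega>, W \<omega>))"
    unfolding Gpt using int1 int2 unfolding J_def by (rule Bochner_Integration.integrable_diff)
  have eq1: "(\<integral>\<omega>. loss (snd (snd \<omega>)) (fst \<omega> (if fst (snd \<omega>) i then i else i + n))
                     - loss (snd (snd \<omega>)) (sel_sample n (fst \<omega>) (fst (snd \<omega>)) i) \<partial>supersample_space PZ n K)
       = (\<integral>x. hk x \<partial>PX)"
    using cond_distr_integral(2)[OF Jp kap' Gm intG] unfolding Gpt J_def PX_def hk_def by simp
  have hkint: "integrable PX hk"
    using cond_distr_integral(1)[OF Jp kap' Gm intG] unfolding PX_def hk_def .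
  have hmm: "hm \<in> borel_measurable MX"
    unfolding hm_def
  proof (rule integral_measurable_kernel[where f="\<lambda>x w. G (x, w)"])
    show "(\<lambda>(x, w). G (x, w)) \<in> borel_measurable (MX \<Otimes>\<^sub>M borel)" using Gm by simp
    show "(\<lambda>x. mu (fst x)) \<in> measurable MX (subprob_algebra borel)"
      unfolding MX_def by (rule measurable_compose[OF measurable_fst measurable_prob_algebraD[OF mum]])
  qed
  have hmPX: "hm \<in> borel_measurable PX" unfolding PX_def
    by (subst measurable_cong_sets[OF sets_distr refl]) (rule hmm)
  have hkPX: "hk \<in> borel_measurable PX" using hkint by (rule borel_measurable_integrable)
  have hm_flip: "hm (Xf \<omega>) = - hm (X \<omega>)" for \<omega>
    unfolding hm_def Xf_def X_def G_def by (simp flip: integral_minus)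
  have hm0: "(\<integral>x. hm x \<partial>PX) = 0"
  proof -
    have "distr J MX Xf = PX"
      unfolding PX_def J_def MX_def Xf_def X_def by (rule J_flip[OF PZ Km i])
    then have "(\<integral>x. hm x \<partial>PX) = (\<integral>x. hm x \<partial>distr J MX Xf)" by simp
    also have "\<dots> = (\<integral>\<omega>. hm (Xf \<omega>) \<partial>J)" by (rule integral_distr[OF Xfm hmm])
    also have "\<dots> = - (\<integral>\<omega>. hm (X \<omega>) \<partial>J)" by (simp add: hm_flip)
    also have "(\<integral>\<omega>. hm (X \<omega>) \<partial>J) = (\<integral>x. hm x \<partial>PX)" unfolding PX_def by (rule integral_distr[OF Xm hmm, symmetric])
    finally show ?thesis by simp
  qed
  have dPX: "(\<lambda>x. hk x - hm x) \<in> borel_measurable PX" using hkPX hmPX by (rule borel_measurable_diff)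
  have step1: "ennreal \<bar>\<integral>x. hk x \<partial>PX\<bar> \<le> (\<integral>\<^sup>+x. ennreal \<bar>hk x - hm x\<bar> \<partial>PX)"
  proof (cases "integrable PX hm")
    case True
    have di: "integrable PX (\<lambda>x. hk x - hm x)" using hkint True by (rule Bochner_Integration.integrable_diff)
    have "\<bar>\<integral>x. hk x \<partial>PX\<bar> = \<bar>\<integral>x. hk x - hm x \<partial>PX\<bar>" using hkint True hm0 by simp
    also have "\<dots> \<le> (\<integral>x. \<bar>hk x - hm x\<bar> \<partial>PX)" by (rule integral_abs_bound)
    finally have "ennreal \<bar>\<integral>x. hk x \<partial>PX\<bar> \<le> ennreal (\<integral>x. \<bar>hk x - hm x\<bar> \<partial>PX)" by (rule ennreal_leI)
    also have "\<dots> = (\<integral>\<^sup>+x. ennreal \<bar>hk x - hm x\<bar> \<partial>PX)"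
      using di by (subst nn_integral_eq_integral) auto
    finally show ?thesis .
  next
    case False
    have "\<not> integrable PX (\<lambda>x. hk x - hm x)"
    proof
      assume "integrable PX (\<lambda>x. hk x - hm x)"
      from Bochner_Integration.integrable_diff[OF hkint this] False show False by simp
    qed
    then have "(\<integral>\<^sup>+x. ennreal \<bar>hk x - hm x\<bar> \<partial>PX) = \<infinity>"
      using dPX by (auto simp: integrable_iff_bounded less_top[symmetric])
    then show ?thesis by simp
  qed
  have step2: "(\<integral>\<^sup>+x. ennreal \<bar>hk x - hm x\<bar> \<partial>PX) = (\<integral>\<^sup>+\<omega>. ennreal \<bar>hk (X \<omega>) - hm (X \<omega>)\<bar> \<partial>J)"
    unfolding PX_def
  proof (rule nn_integral_distr[OF Xm])
    show "(\<lambda>x. ennreal \<bar>hk x - hm x\<bar>) \<in> borel_measurable (distr J MX X)"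
    proof -
      have dMX: "(\<lambda>x. hk x - hm x) \<in> borel_measurable MX"
        using dPX unfolding PX_def by (subst (asm) measurable_cong_sets[OF sets_distr refl])
      have g: "(\<lambda>r::real. ennreal \<bar>r\<bar>) \<in> borel_measurable borel" by measurable
      show ?thesis using measurable_compose[OF dMX g] by (subst measurable_cong_sets[OF sets_distr refl]) simp
    qed
  qed
  have Lnn: "0 \<le> L"
  proof -
    obtain z where "z \<in> space PZ" using prob_space.not_empty[OF PZ] by blast
    then show ?thesis using lip lipschitz_on_nonneg by blast
  qed
  have Xsp: "X \<omega> \<in> space MX" if "\<omega> \<in> space J" for \<omega> using measurable_space[OF Xm that] .
  have zsp: "fst \<omega> i \<in> space PZ" "fst \<omega> (i + n) \<in> space PZ" if "\<omega> \<in> space J" for \<omega>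
    using Xsp[OF that] unfolding MX_def X_def by (auto simp: space_pair_measure)
  have Pk: "prob_space (kap (X \<omega>))" "sets (kap (X \<omega>)) = sets borel" if "\<omega> \<in> space J" for \<omega>
    using measurable_space[OF kapm Xsp[OF that]] by (auto simp: space_prob_algebra)
  have Pm: "prob_space (mu (fst (X \<omega>)))" "sets (mu (fst (X \<omega>))) = sets borel" if "\<omega> \<in> space J" for \<omega>
  proof -
    have "fst (X \<omega>) \<in> space (PZ \<Otimes>\<^sub>M PZ)" using Xsp[OF that] unfolding MX_def by (auto simp: space_pair_measure)
    from measurable_space[OF mum this]
    show "prob_space (mu (fst (X \<omega>)))" "sets (mu (fst (X \<omega>))) = sets borel" by (auto simp: space_prob_algebra)
  qed
  have Gx: "G (X \<omega>, w) = (if fst (snd \<omega>) i then 1 else -1) * (loss w (fst \<omega> i) - loss w (fst \<omega> (i + n)))" for \<omega> w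
    by (simp add: G_def X_def)
  have hkX: "hk (X \<omega>) = (\<integral>w. (if fst (snd \<omega>) i then 1 else -1) * (loss w (fst \<omega> i) - loss w (fst \<omega> (i + n))) \<partial>kap (X \<omega>))" for \<omega>
    unfolding hk_def Gx ..
  have hmX: "hm (X \<omega>) = (\<integral>w. (if fst (snd \<omega>) i then 1 else -1) * (loss w (fst \<omega> i) - loss w (fst \<omega> (i + n))) \<partial>mu (fst \<omega> i, fst \<omega> (i + n)))" for \<omega>
    unfolding hm_def Gx by (simp add: X_def)
  have main: "(\<integral>\<^sup>+\<omega>. ennreal \<bar>hk (X \<omega>) - hm (X \<omega>)\<bar> \<partial>J) \<le> ennreal (2 * L) * (\<integral>\<^sup>+\<omega>. wasserstein1 (kap ((fst \<omega> i, fst \<omega> (i + n)), fst (snd \<omega>) i))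
                                         (mu (fst \<omega> i, fst \<omega> (i + n))) \<partial>J)"
  proof (cases "L = 0")
    case True
    have "hk (X \<omega>) - hm (X \<omega>) = 0" if om: "\<omega> \<in> space J" for \<omega>
    proof -
      define c where "c = (if fst (snd \<omega>) i then 1 else -1) * (loss undefined (fst \<omega> i) - loss undefined (fst \<omega> (i + n)))"
      have const: "(if fst (snd \<omega>) i then 1 else -1) * (loss w (fst \<omega> i) - loss w (fst \<omega> (i + n))) = c" for w
      proof -
        have "loss w (fst \<omega> i) = loss undefined (fst \<omega> i)"
          using lipschitz_onD[of 0 UNIV "\<lambda>w. loss w (fst \<omega> i)" w undefined] lip zsp[OF om] True by auto
        moreover have "loss w (fst \<omega> (i + n)) = loss undefined (fst \<omega> (i + n))"
          using lipschitz_onD[of 0 UNIV "\<lambda>w. loss w (fst \<omega> (i + n))" w undefined] lip zsp[OF om] True by auto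
        ultimately show ?thesis by (simp add: c_def)
      qed
      have "hk (X \<omega>) = c"
        unfolding hkX const using prob_space.prob_space[OF Pk(1)[OF om]] by simp
      moreover have "hm (X \<omega>) = c"
        unfolding hmX const using prob_space.prob_space[OF Pm(1)[OF om]] by (simp add: X_def)
      ultimately show ?thesis by simp
    qed
    then have "(\<integral>\<^sup>+\<omega>. ennreal \<bar>hk (X \<omega>) - hm (X \<omega>)\<bar> \<partial>J) = (\<integral>\<^sup>+\<omega>. 0 \<partial>J)"
      by (intro nn_integral_cong) simp
    then show ?thesis by simp
  next
    case False
    then have L: "L > 0" using Lnn by simp
    have pt: "ennreal (\<bar>hk (X \<omega>) - hm (X \<omega>)\<bar> / (2 * L)) \<le> wasserstein1 (kap ((fst \<omega> i, fst \<omega> (i + n)), fst (snd \<omega>) i))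
                                         (mu (fst \<omega> i, fst \<omega> (i + n)))" if om: "\<omega> \<in> space J" for \<omega>
    proof -
      have "ennreal (\<bar>hk (X \<omega>) - hm (X \<omega>)\<bar> / (2 * L)) \<le> wasserstein1 (kap (X \<omega>)) (mu (fst \<omega> i, fst \<omega> (i + n)))"
        unfolding hkX hmX
        by (rule pw_bound[OF Pk[OF om] Pm[OF om, unfolded X_def fst_conv] L]) (use lip zsp[OF om] in auto)
      then show ?thesis by (simp add: X_def)
    qed
    have mX: "(\<lambda>\<omega>. ennreal (\<bar>hk (X \<omega>) - hm (X \<omega>)\<bar> / (2 * L))) \<in> borel_measurable J"
    proof -
      have dMX: "(\<lambda>x. hk x - hm x) \<in> borel_measurable MX"
        using dPX unfolding PX_def by (subst (asm) measurable_cong_sets[OF sets_distr refl])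
      have g: "(\<lambda>r::real. ennreal (\<bar>r\<bar> / (2 * L))) \<in> borel_measurable borel" by measurable
      show ?thesis using measurable_compose[OF Xm measurable_compose[OF dMX g]] by simp
    qed
    have "(\<integral>\<^sup>+\<omega>. ennreal \<bar>hk (X \<omega>) - hm (X \<omega>)\<bar> \<partial>J) = (\<integral>\<^sup>+\<omega>. ennreal (2 * L) * ennreal (\<bar>hk (X \<omega>) - hm (X \<omega>)\<bar> / (2 * L)) \<partial>J)"
      using L by (intro nn_integral_cong) (simp flip: ennreal_mult)
    also have "\<dots> = ennreal (2 * L) * (\<integral>\<^sup>+\<omega>. ennreal (\<bar>hk (X \<omega>) - hm (X \<omega>)\<bar> / (2 * L)) \<partial>J)"
      by (rule nn_integral_cmult[OF mX])
    also have "\<dots> \<le> ennreal (2 * L) * (\<integral>\<^sup>+\<omega>. wasserstein1 (kap ((fst \<omega> i, fst \<omega> (i + n)), fst (snd \<omega>) i))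
                                         (mu (fst \<omega> i, fst \<omega> (i + n))) \<partial>J)"
      by (intro mult_left_mono nn_integral_mono pt) simp_all
    finally show ?thesis .
  qed
  show ?thesis
    unfolding eq1 using order_trans[OF step1[unfolded step2] main] unfolding J_def .
qed

lemma ghost:
  fixes PZ :: "'z measure" and n :: nat and K :: "(nat \<Rightarrow> 'z) \<Rightarrow> 'w::polish_space measure"
    and loss :: "'w \<Rightarrow> 'z \<Rightarrow> real"
  assumes PZ: "prob_space PZ"
    and Km: "K \<in> measurable (PiM {..<n} (\<lambda>_. PZ)) (prob_algebra borel)"
    and loss_meas: "(\<lambda>(w, z). loss w z) \<in> borel_measurable (borel \<Otimes>\<^sub>M PZ)"
    and int_pop: "integrable (supersample_space PZ n K \<Otimes>\<^sub>M PZ) (\<lambda>(\<omega>, z). loss (snd (snd \<omega>)) z)"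
    and i: "i < n"
  shows "integrable (supersample_space PZ n K) (\<lambda>\<omega>. (\<integral>z. loss (snd (snd \<omega>)) z \<partial>PZ))"
    and "integrable (supersample_space PZ n K) (\<lambda>\<omega>. loss (snd (snd \<omega>)) (fst \<omega> (if fst (snd \<omega>) i then i else i + n)))"
    and "(\<integral>\<omega>. loss (snd (snd \<omega>)) (fst \<omega> (if fst (snd \<omega>) i then i else i + n)) \<partial>supersample_space PZ n K)
         = (\<integral>\<omega>. (\<integral>z. loss (snd (snd \<omega>)) z \<partial>PZ) \<partial>supersample_space PZ n K)"
proof -
  define J where "J = supersample_space PZ n K"
  define W where "W \<omega> = snd (snd \<omega>)" for \<omega> :: "(nat \<Rightarrow> 'z) \<times> (nat \<Rightarrow> bool) \<times> 'w"
  define V where "V \<omega> = (snd (snd \<omega>), fst \<omega> (if fst (snd \<omega>) i then i else i + n))" for \<omega> :: "(nat \<Rightarrow> 'z) \<times> (nat \<Rightarrow> bool) \<times> 'w"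
  have Jp: "prob_space J" unfolding J_def by (rule J_prob[OF PZ Km])
  have sJ: "sets J = sets (PiM {..<2*n} (\<lambda>_. PZ) \<Otimes>\<^sub>M (PiM {..<n} (\<lambda>_. Bern) \<Otimes>\<^sub>M borel))"
    unfolding J_def by (rule J_sets[OF PZ Km])
  interpret JP: pair_sigma_finite J PZ
    by (intro pair_sigma_finite.intro prob_space_imp_sigma_finite Jp PZ)
  have Wm: "W \<in> measurable J borel" unfolding W_def
    by (subst measurable_cong_sets[OF sJ refl]) measurable
  have Vm: "V \<in> measurable J (borel \<Otimes>\<^sub>M PZ)"
  proof -
    have Zm': "(\<lambda>p. fst p (if snd p i then i else i + n)) \<in> measurable (PiM {..<2*n} (\<lambda>_. PZ) \<Otimes>\<^sub>M PiM {..<n} (\<lambda>_. Bern)) PZ"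
      using i by (intro cond_comp_meas[OF PZ Km]) auto
    have Zm: "(\<lambda>\<omega>. fst \<omega> (if fst (snd \<omega>) i then i else i + n)) \<in> measurable J PZ"
      by (subst measurable_cong_sets[OF sJ refl]) (rule measurable_compose[OF TT_PB[OF PZ Km] Zm', simplified])
    show ?thesis unfolding V_def by (rule measurable_Pair[OF Wm[unfolded W_def] Zm])
  qed
  have pm: "(\<lambda>(\<omega>, z). (W \<omega>, z)) \<in> measurable (J \<Otimes>\<^sub>M PZ) (borel \<Otimes>\<^sub>M PZ)"
    using Wm by measurable
  have D: "distr (J \<Otimes>\<^sub>M PZ) (borel \<Otimes>\<^sub>M PZ) (\<lambda>(\<omega>, z). (W \<omega>, z)) = distr J (borel \<Otimes>\<^sub>M PZ) V"
  proof -
    have "distr J borel W \<Otimes>\<^sub>M distr PZ PZ (\<lambda>x. x) = distr (J \<Otimes>\<^sub>M PZ) (borel \<Otimes>\<^sub>M PZ) (\<lambda>(x, y). (W x, y))"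
      by (rule pair_measure_distr[OF Wm measurable_id]) (simp add: prob_space_imp_sigma_finite PZ)
    then have "distr (J \<Otimes>\<^sub>M PZ) (borel \<Otimes>\<^sub>M PZ) (\<lambda>(\<omega>, z). (W \<omega>, z)) = distr J borel W \<Otimes>\<^sub>M PZ" by simp
    also have "\<dots> = distr J (borel \<Otimes>\<^sub>M PZ) V"
      unfolding J_def W_def V_def by (rule J_indep[OF PZ Km i])
    finally show ?thesis .
  qed
  have lm: "(\<lambda>(w, z). loss w z) \<in> borel_measurable (borel \<Otimes>\<^sub>M PZ)" by (rule loss_meas)
  have f1: "(\<lambda>p. (\<lambda>(w, z). loss w z) ((\<lambda>(\<omega>, z). (W \<omega>, z)) p)) = (\<lambda>(\<omega>, z). loss (snd (snd \<omega>)) z)"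
    by (auto simp: W_def)
  have f2: "(\<lambda>\<omega>. (\<lambda>(w, z). loss w z) (V \<omega>)) = (\<lambda>\<omega>. loss (snd (snd \<omega>)) (fst \<omega> (if fst (snd \<omega>) i then i else i + n)))"
    by (auto simp: V_def)
  have int_pop': "integrable (J \<Otimes>\<^sub>M PZ) (\<lambda>(\<omega>, z). loss (snd (snd \<omega>)) z)" using int_pop unfolding J_def .
  have "integrable (distr (J \<Otimes>\<^sub>M PZ) (borel \<Otimes>\<^sub>M PZ) (\<lambda>(\<omega>, z). (W \<omega>, z))) (\<lambda>(w, z). loss w z)"
    using int_pop' unfolding integrable_distr_eq[OF pm lm] f1 .
  then have "integrable (distr J (borel \<Otimes>\<^sub>M PZ) V) (\<lambda>(w, z). loss w z)" unfolding D .
  then have "integrable J (\<lambda>\<omega>. loss (snd (snd \<omega>)) (fst \<omega> (if fst (snd \<omega>) i then i else i + n)))"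
    unfolding integrable_distr_eq[OF Vm lm] f2 .
  then show "integrable (supersample_space PZ n K) (\<lambda>\<omega>. loss (snd (snd \<omega>)) (fst \<omega> (if fst (snd \<omega>) i then i else i + n)))"
    unfolding J_def .
  show "integrable (supersample_space PZ n K) (\<lambda>\<omega>. (\<integral>z. loss (snd (snd \<omega>)) z \<partial>PZ))"
    using JP.integrable_fst'[OF int_pop'] unfolding J_def by simp
  have "(\<integral>\<omega>. loss (snd (snd \<omega>)) (fst \<omega> (if fst (snd \<omega>) i then i else i + n)) \<partial>J)
       = (\<integral>p. (\<lambda>(w, z). loss w z) p \<partial>distr J (borel \<Otimes>\<^sub>M PZ) V)"
    unfolding integral_distr[OF Vm lm] f2 ..
  also have "\<dots> = (\<integral>p. (\<lambda>(w, z). loss w z) p \<partial>distr (J \<Otimes>\<^sub>M PZ) (borel \<Otimes>\<^sub>M PZ) (\<lambda>(\<omega>, z). (W \<omega>, z)))"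
    unfolding D ..
  also have "\<dots> = (\<integral>p. (\<lambda>(\<omega>, z). loss (snd (snd \<omega>)) z) p \<partial>(J \<Otimes>\<^sub>M PZ))"
    unfolding integral_distr[OF pm lm] f1 ..
  also have "\<dots> = (\<integral>\<omega>. (\<integral>z. loss (snd (snd \<omega>)) z \<partial>PZ) \<partial>J)"
    using JP.integral_fst'[OF int_pop'] by simp
  finally show "(\<integral>\<omega>. loss (snd (snd \<omega>)) (fst \<omega> (if fst (snd \<omega>) i then i else i + n)) \<partial>supersample_space PZ n K)
         = (\<integral>\<omega>. (\<integral>z. loss (snd (snd \<omega>)) z \<partial>PZ) \<partial>supersample_space PZ n K)" unfolding J_def .
qed

theorem theorem3:
  fixes PZ :: "'z measure"
    and n :: nat
    and K :: "(nat \<Rightarrow> 'z) \<Rightarrow> 'w::polish_space measure"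
    and loss :: "'w \<Rightarrow> 'z \<Rightarrow> real"
    and L :: real
    and kappa :: "nat \<Rightarrow> ('z \<times> 'z) \<times> bool \<Rightarrow> 'w measure"
    and mu :: "nat \<Rightarrow> 'z \<times> 'z \<Rightarrow> 'w measure"
  defines "J \<equiv> supersample_space PZ n K"
  assumes PZ: "prob_space PZ"
    and n_pos: "n > 0"
    and K_meas: "K \<in> measurable (PiM {..<n} (\<lambda>_. PZ)) (prob_algebra borel)"
    and loss_meas: "(\<lambda>(w, z). loss w z) \<in> borel_measurable (borel \<Otimes>\<^sub>M PZ)"
    and lip: "\<forall>z\<in>space PZ. L-lipschitz_on UNIV (\<lambda>w. loss w z)"
    and int_pop: "integrable (J \<Otimes>\<^sub>M PZ) (\<lambda>(\<omega>, z). loss (snd (snd \<omega>)) z)"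
    and int_emp: "\<forall>i<n. integrable J
                   (\<lambda>\<omega>. loss (snd (snd \<omega>)) (sel_sample n (fst \<omega>) (fst (snd \<omega>)) i))"
    and kappa: "\<forall>i<n. is_cond_distr J ((PZ \<Otimes>\<^sub>M PZ) \<Otimes>\<^sub>M count_space UNIV)
                   (\<lambda>\<omega>. ((fst \<omega> i, fst \<omega> (i + n)), fst (snd \<omega>) i)) borel (\<lambda>\<omega>. snd (snd \<omega>)) (kappa i)"
    and mu: "\<forall>i<n. is_cond_distr J (PZ \<Otimes>\<^sub>M PZ)
                   (\<lambda>\<omega>. (fst \<omega> i, fst \<omega> (i + n))) borel (\<lambda>\<omega>. snd (snd \<omega>)) (mu i)"
  shows "ennreal \<bar>\<integral>\<omega>. (\<integral>z. loss (snd (snd \<omega>)) z \<partial>PZ)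
                  - (1 / real n) * (\<Sum>i<n. loss (snd (snd \<omega>)) (sel_sample n (fst \<omega>) (fst (snd \<omega>)) i)) \<partial>J\<bar>
         \<le> ennreal (2 * L / real n) *
            (\<Sum>i<n. \<integral>\<^sup>+\<omega>. wasserstein1 (kappa i ((fst \<omega> i, fst \<omega> (i + n)), fst (snd \<omega>) i))
                                         (mu i (fst \<omega> i, fst \<omega> (i + n))) \<partial>J)"
proof -
  define pop where "pop \<omega> = (\<integral>z. loss (snd (snd \<omega>)) z \<partial>PZ)" for \<omega> :: "(nat \<Rightarrow> 'z) \<times> (nat \<Rightarrow> bool) \<times> 'w"
  define li where "li i \<omega> = loss (snd (snd \<omega>)) (sel_sample n (fst \<omega>) (fst (snd \<omega>)) i)" for i and \<omega> :: "(nat \<Rightarrow> 'z) \<times> (nat \<Rightarrow> bool) \<times> 'w"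
  define lg where "lg i \<omega> = loss (snd (snd \<omega>)) (fst \<omega> (if fst (snd \<omega>) i then i else i + n))" for i and \<omega> :: "(nat \<Rightarrow> 'z) \<times> (nat \<Rightarrow> bool) \<times> 'w"
  define a where "a i = (\<integral>\<omega>. lg i \<omega> - li i \<omega> \<partial>J)" for i
  define I where "I i = (\<integral>\<^sup>+\<omega>. wasserstein1 (kappa i ((fst \<omega> i, fst \<omega> (i + n)), fst (snd \<omega>) i))
                                         (mu i (fst \<omega> i, fst \<omega> (i + n))) \<partial>J)" for i
  have int_pop': "integrable (supersample_space PZ n K \<Otimes>\<^sub>M PZ) (\<lambda>(\<omega>, z). loss (snd (snd \<omega>)) z)"
    using int_pop unfolding J_def .
  have popint: "integrable J pop"
    using ghost(1)[OF PZ K_meas loss_meas int_pop' n_pos] unfolding J_def pop_def .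
  have lgint: "integrable J (lg i)" if "i < n" for i
    using ghost(2)[OF PZ K_meas loss_meas int_pop' that] unfolding J_def lg_def .
  have lgeq: "(\<integral>\<omega>. lg i \<omega> \<partial>J) = (\<integral>\<omega>. pop \<omega> \<partial>J)" if "i < n" for i
    using ghost(3)[OF PZ K_meas loss_meas int_pop' that] unfolding J_def lg_def pop_def .
  have liint: "integrable J (li i)" if "i < n" for i
    using int_emp that unfolding li_def by blast
  have aeq: "a i = (\<integral>\<omega>. pop \<omega> \<partial>J) - (\<integral>\<omega>. li i \<omega> \<partial>J)" if "i < n" for i
    unfolding a_def using lgint[OF that] liint[OF that] lgeq[OF that] by simp
  have abound: "ennreal \<bar>a i\<bar> \<le> ennreal (2 * L) * I i" if i: "i < n" for i
  proof -
    have k: "is_cond_distr (supersample_space PZ n K) ((PZ \<Otimes>\<^sub>M PZ) \<Otimes>\<^sub>M count_space UNIV)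
                   (\<lambda>\<omega>. ((fst \<omega> i, fst \<omega> (i + n)), fst (snd \<omega>) i)) borel (\<lambda>\<omega>. snd (snd \<omega>)) (kappa i)"
      using kappa i unfolding J_def by blast
    have m: "is_cond_distr (supersample_space PZ n K) (PZ \<Otimes>\<^sub>M PZ)
                   (\<lambda>\<omega>. (fst \<omega> i, fst \<omega> (i + n))) borel (\<lambda>\<omega>. snd (snd \<omega>)) (mu i)"
      using mu i unfolding J_def by blast
    show ?thesis
      using per_i[OF PZ K_meas loss_meas lip i k m lgint[OF i, unfolded J_def lg_def] liint[OF i, unfolded J_def li_def]]
      unfolding a_def I_def J_def lg_def li_def .
  qed
  have E: "(\<integral>\<omega>. pop \<omega> - (1 / real n) * (\<Sum>i<n. li i \<omega>) \<partial>J) = (1 / real n) * (\<Sum>i<n. a i)"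
  proof -
    have "(\<integral>\<omega>. pop \<omega> - (1 / real n) * (\<Sum>i<n. li i \<omega>) \<partial>J)
        = (\<integral>\<omega>. pop \<omega> \<partial>J) - (1 / real n) * (\<Sum>i<n. (\<integral>\<omega>. li i \<omega> \<partial>J))"
    proof -
      have sint: "integrable J (\<lambda>\<omega>. \<Sum>i<n. li i \<omega>)" using liint by (auto intro!: Bochner_Integration.integrable_sum)
      have "(\<integral>\<omega>. pop \<omega> - (1 / real n) * (\<Sum>i<n. li i \<omega>) \<partial>J)
          = (\<integral>\<omega>. pop \<omega> \<partial>J) - (\<integral>\<omega>. (1 / real n) * (\<Sum>i<n. li i \<omega>) \<partial>J)"
        by (rule Bochner_Integration.integral_diff[OF popint integrable_mult_right[OF sint]])
      also have "(\<integral>\<omega>. (1 / real n) * (\<Sum>i<n. li i \<omega>) \<partial>J) = (1 / real n) * (\<integral>\<omega>. (\<Sum>i<n. li i \<omega>) \<partial>J)"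
        by (rule integral_mult_right_zero)
      also have "(\<integral>\<omega>. (\<Sum>i<n. li i \<omega>) \<partial>J) = (\<Sum>i<n. (\<integral>\<omega>. li i \<omega> \<partial>J))"
        by (rule Bochner_Integration.integral_sum) (simp add: liint)
      finally show ?thesis .
    qed
    also have "\<dots> = (1 / real n) * (\<Sum>i<n. (\<integral>\<omega>. pop \<omega> \<partial>J) - (\<integral>\<omega>. li i \<omega> \<partial>J))"
      using n_pos by (simp add: sum_subtractf field_simps)
    also have "\<dots> = (1 / real n) * (\<Sum>i<n. a i)"
      by (simp add: aeq)
    finally show ?thesis .
  qed
  have "ennreal \<bar>(1 / real n) * (\<Sum>i<n. a i)\<bar> \<le> ennreal ((1 / real n) * (\<Sum>i<n. \<bar>a i\<bar>))"
    by (intro ennreal_leI) (simp add: abs_mult sum_abs divide_right_mono)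
  also have "\<dots> = ennreal (1 / real n) * (\<Sum>i<n. ennreal \<bar>a i\<bar>)"
  proof -
    have "(\<Sum>i<n. ennreal \<bar>a i\<bar>) = ennreal (\<Sum>i<n. \<bar>a i\<bar>)" by (rule sum_ennreal) simp
    moreover have "ennreal ((1 / real n) * (\<Sum>i<n. \<bar>a i\<bar>)) = ennreal (1 / real n) * ennreal (\<Sum>i<n. \<bar>a i\<bar>)"
      by (rule ennreal_mult) (auto intro: sum_nonneg)
    ultimately show ?thesis by simp
  qed
  also have "\<dots> \<le> ennreal (1 / real n) * (\<Sum>i<n. ennreal (2 * L) * I i)"
    by (intro mult_left_mono sum_mono abound) auto
  also have "\<dots> = ennreal (2 * L / real n) * (\<Sum>i<n. I i)"
  proof -
    have L0: "0 \<le> L"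
    proof -
      obtain z where "z \<in> space PZ" using prob_space.not_empty[OF PZ] by blast
      then show ?thesis using lip lipschitz_on_nonneg by blast
    qed
    have "ennreal (2 * L / real n) = ennreal (1 / real n) * ennreal (2 * L)"
      using L0 by (simp add: ennreal_mult[symmetric])
    then show ?thesis by (simp add: sum_distrib_left mult.assoc)
  qed
  finally show ?thesis
    unfolding E[symmetric] pop_def li_def I_def .
qed

end
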